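(* Consider holdings of type $J=A$, an integer $R\ge1$, connection parameters $p_1>1$, $p_2>1$, and the configuration $(C_1,C_2)=(1,1)$ almost surely. (a) If $x=0$, then $(C_1,C_2)$ is uninfected and the system is non-resilient. (b) If $x\le -1$ (integer), then $(C_1,C_2)$ is uninfected and the system is resilient.
   Context: Let $x\le0$ be an integer (support level). Let $\mathbf{D}=\{(j,k)\in\mathbb{Z}^2: x\le j\le R,\ x\le k\le R\}$, $\mathbf{D}_{A,1}=\{(j,k)\in\mathbf{D}: j\le x \text{ or } (j+k\le 0 \text{ and } j\le -x)\}$, $\mathbf{D}_{A,2}=\{(j,k)\in\mathbf{D}: k\le x \text{ or } (j+k\le 0 \text{ and } k\le -x)\}$. Network: for each $n$ there are holdings $i\in[n]$, each with subsidiaries $i_1,i_2$ with initial integer capitals $(c_{i,1}(n),c_{i,2}(n))\in\mathbf{D}$; for each $l\in\{1,2\}$ and ordered pair $i\ne j$, a directed edge $i_l\to j_l$ is present with probability $p_l/n$, all independent. Contagion: $c^{(0)}_{i,l}=c_{i,l}(n)$; $\mathcal{S}_{l,k}=\{i: (c^{(k)}_{i,1},c^{(k)}_{i,2})\in\mathbf{D}_{A,l}\}$, $\mathcal{S}_{l,-1}=\emptyset$, $c^{(k+1)}_{j,l}=\max\{x,c^{(k)}_{j,l}-N^{(k)}_{j,l}\}$ with $N^{(k)}_{j,l}$ the number of $i\in\mathcal{S}_{l,k}\setminus\mathcal{S}_{l,k-1}$ with an edge $i_l\to j_l$; final sets $\mathcal{S}_l=\bigcup_k\mathcal{S}_{l,k}$.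 A sequence of networks has limit law $G$ on $\mathbf{D}$ if $n^{-1}\#\{i: c_{i,1}(n)\le a, c_{i,2}(n)\le b\}\to G((-\infty,a]\times(-\infty,b])$ for all $(a,b)\in\mathbf{D}$. A configuration $(C_1,C_2)$ (random vector on $\mathbf{D}$) is uninfected if $\mathbb{P}((C_1,C_2)\in\mathbf{D}_{A,1}\cup\mathbf{D}_{A,2})=0$. A shocked configuration is a random vector $(\tilde C_1,\tilde C_2)$ on $\mathbf{D}$ on the same probability space with $\mathbb{P}(\tilde C_1\le C_1,\tilde C_2\le C_2)=1$ and $\mathbb{P}((\tilde C_1,\tilde C_2)\in\mathbf{D}_{A,1}\cup\mathbf{D}_{A,2})>0$. The system is resilient if for every $\tilde\varepsilon>0$ there is $\varepsilon>0$ such that for every shocked configuration with $\mathbb{P}((\tilde C_1,\tilde C_2)\ne(C_1,C_2))\le\varepsilon$ and every sequence of networks with limit law that of $(\tilde C_1,\tilde C_2)$, $\mathbb{P}(|\mathcal{S}_1|+|\mathcal{S}_2|\le\tilde\varepsilon n)\to1$. It is non-resilient if there is $\Delta>0$ such that for every shocked configuration and every such sequence, $\mathbb{P}(|\mathcal{S}_1|+|\mathcal{S}_2|\ge\Delta n)\to1$. *)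

theory Defs
  imports "HOL-Probability.Probability"
begin

definition capD :: "int \<Rightarrow> int \<Rightarrow> (int \<times> int) set" where
  "capD x R = {(j, k). x \<le> j \<and> j \<le> R \<and> x \<le> k \<and> k \<le> R}"

definition DA :: "int \<Rightarrow> int \<Rightarrow> nat \<Rightarrow> (int \<times> int) set" where
  "DA x R l = capD x R \<inter>
     (if l = 1 then {(j, k). j \<le> x \<or> (j + k \<le> 0 \<and> j \<le> - x)}
      else {(j, k). k \<le> x \<or> (j + k \<le> 0 \<and> k \<le> - x)})"

text \<open>Random two-layer network on n holdings: G (l, i, j) says edge i_l \<rightarrow> j_l is present,
  independently with probability p_l / n (clamped to [0,1]).\<close>
definition edge_pmf :: "real \<Rightarrow> real \<Rightarrow> nat \<Rightarrow> (nat \<times> nat \<times> nat \<Rightarrow> bool) pmf" where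
  "edge_pmf p1 p2 n =
     Pi_pmf {(l, i, j). l \<in> {1, 2} \<and> i < n \<and> j < n \<and> i \<noteq> j} False
       (\<lambda>(l, i, j). bernoulli_pmf (min 1 ((if l = 1 then p1 else p2) / real n)))"

definition comp :: "nat \<Rightarrow> int \<times> int \<Rightarrow> int" where
  "comp l c = (if l = 1 then fst c else snd c)"

definition infected :: "int \<Rightarrow> int \<Rightarrow> nat \<Rightarrow> (nat \<Rightarrow> int \<times> int) \<Rightarrow> nat \<Rightarrow> nat set" where
  "infected x R n cap l = {i. i < n \<and> cap i \<in> DA x R l}"

text \<open>contagion ... k = (c^(k), \<lambda>l. S_{l,k-1}), with S_{l,-1} = {}.\<close>
fun contagion :: "int \<Rightarrow> int \<Rightarrow> nat \<Rightarrow> (nat \<times> nat \<times> nat \<Rightarrow> bool) \<Rightarrow> (nat \<Rightarrow> int \<times> int)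
    \<Rightarrow> nat \<Rightarrow> (nat \<Rightarrow> int \<times> int) \<times> (nat \<Rightarrow> nat set)" where
  "contagion x R n G c 0 = (c, \<lambda>l. {})"
| "contagion x R n G c (Suc k) =
     (let (cap, prev) = contagion x R n G c k;
          S = infected x R n cap;
          N = (\<lambda>l j. card {i \<in> S l - prev l. G (l, i, j)})
      in (\<lambda>j. (max x (fst (cap j) - int (N 1 j)), max x (snd (cap j) - int (N 2 j))), S))"

definition final_S :: "int \<Rightarrow> int \<Rightarrow> nat \<Rightarrow> (nat \<times> nat \<times> nat \<Rightarrow> bool) \<Rightarrow> (nat \<Rightarrow> int \<times> int)
    \<Rightarrow> nat \<Rightarrow> nat set" where
  "final_S x R n G c l = (\<Union>k. infected x R n (fst (contagion x R n G c k)) l)"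

text \<open>A sequence of networks (initial capitals c n i of holding i < n) with limit law G on D.\<close>
definition has_limit_law :: "int \<Rightarrow> int \<Rightarrow> (nat \<Rightarrow> nat \<Rightarrow> int \<times> int) \<Rightarrow> (int \<times> int) pmf \<Rightarrow> bool" where
  "has_limit_law x R c G \<longleftrightarrow>
     (\<forall>n. \<forall>i<n. c n i \<in> capD x R) \<and>
     (\<forall>(a, b) \<in> capD x R.
        (\<lambda>n. real (card {i. i < n \<and> fst (c n i) \<le> a \<and> snd (c n i) \<le> b}) / real n)
          \<longlonglongrightarrow> measure_pmf.prob G {(u, v). u \<le> a \<and> v \<le> b})"

definition uninfected :: "int \<Rightarrow> int \<Rightarrow> (int \<times> int) pmf \<Rightarrow> bool" where
  "uninfected x R C \<longleftrightarrow> set_pmf C \<subseteq> capD x R \<and>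
     measure_pmf.prob C (DA x R 1 \<union> DA x R 2) = 0"

text \<open>A shocked configuration: a joint law Q of (C, C~) with first marginal C.\<close>
definition shocked :: "int \<Rightarrow> int \<Rightarrow> (int \<times> int) pmf \<Rightarrow> ((int \<times> int) \<times> (int \<times> int)) pmf \<Rightarrow> bool" where
  "shocked x R C Q \<longleftrightarrow> map_pmf fst Q = C \<and> set_pmf (map_pmf snd Q) \<subseteq> capD x R \<and>
     measure_pmf.prob Q {(c, c'). fst c' \<le> fst c \<and> snd c' \<le> snd c} = 1 \<and>
     measure_pmf.prob Q {(c, c'). c' \<in> DA x R 1 \<union> DA x R 2} > 0"

definition resilient :: "int \<Rightarrow> int \<Rightarrow> real \<Rightarrow> real \<Rightarrow> (int \<times> int) pmf \<Rightarrow> bool" where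
  "resilient x R p1 p2 C \<longleftrightarrow>
     (\<forall>e'>0. \<exists>e>0. \<forall>Q. shocked x R C Q \<and> measure_pmf.prob Q {(c, c'). c' \<noteq> c} \<le> e \<longrightarrow>
        (\<forall>cs. has_limit_law x R cs (map_pmf snd Q) \<longrightarrow>
          (\<lambda>n. measure_pmf.prob (edge_pmf p1 p2 n)
             {G. real (card (final_S x R n G (cs n) 1) + card (final_S x R n G (cs n) 2)) \<le> e' * real n})
          \<longlonglongrightarrow> 1))"

definition non_resilient :: "int \<Rightarrow> int \<Rightarrow> real \<Rightarrow> real \<Rightarrow> (int \<times> int) pmf \<Rightarrow> bool" where
  "non_resilient x R p1 p2 C \<longleftrightarrow>
     (\<exists>d>0. \<forall>Q. shocked x R C Q \<longrightarrow>
        (\<forall>cs. has_limit_law x R cs (map_pmf snd Q) \<longrightarrow>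
          (\<lambda>n. measure_pmf.prob (edge_pmf p1 p2 n)
             {G. real (card (final_S x R n G (cs n) 1) + card (final_S x R n G (cs n) 2)) \<ge> d * real n})
          \<longlonglongrightarrow> 1))"

end

theory Submission
  imports Defs
begin


abbreviation cap where "cap x R n G c k \<equiv> fst (contagion x R n G c k)"

lemma snd_contagion_0: "snd (contagion x R n G c 0) = (\<lambda>l. {})" by simp

lemma snd_contagion_Suc: "snd (contagion x R n G c (Suc k)) = infected x R n (cap x R n G c k)"
  by (simp add: case_prod_beta Let_def)

lemma comp_cap_Suc:
  assumes "l \<in> {1,2}"
  shows "comp l (cap x R n G c (Suc k) j) = max x (comp l (cap x R n G c k j)
     - int (card {i \<in> infected x R n (cap x R n G c k) l - snd (contagion x R n G c k) l. G (l, i, j)}))"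
  using assms by (auto simp add: case_prod_beta Let_def comp_def)

declare contagion.simps(2)[simp del]

lemma cap_bounds:
  assumes "c j \<in> capD x R" "l \<in> {1,2}"
  shows "x \<le> comp l (cap x R n G c k j) \<and> comp l (cap x R n G c k j) \<le> comp l (c j)"
proof (induction k)
  case 0 then show ?case using assms by (auto simp: capD_def comp_def)
next
  case (Suc k) then show ?case using comp_cap_Suc[OF assms(2)] by auto
qed

lemma cap_capD:
  assumes "c j \<in> capD x R"
  shows "cap x R n G c k j \<in> capD x R"
proof -
  have "x \<le> comp l (cap x R n G c k j) \<and> comp l (cap x R n G c k j) \<le> comp l (c j)" if "l \<in> {1,2}" for l
    using cap_bounds[where c=c and j=j, OF assms that] .
  from this[of 1] this[of 2] assms show ?thesis by (auto simp: capD_def comp_def split: prod.splits)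
qed

lemma cap_mono_Suc:
  assumes "c j \<in> capD x R" "l \<in> {1,2}"
  shows "comp l (cap x R n G c (Suc k) j) \<le> comp l (cap x R n G c k j)"
  using comp_cap_Suc[OF assms(2)] cap_bounds[where c=c and j=j, OF assms] by auto

lemma DA_down:
  assumes "(a, b) \<in> DA x R l" "(a', b') \<in> capD x R" "a' \<le> a" "b' \<le> b"
  shows "(a', b') \<in> DA x R l"
  using assms by (auto simp: DA_def capD_def split: if_splits)

lemma infected_mono_Suc:
  assumes "\<forall>i<n. c i \<in> capD x R" "l \<in> {1,2}"
  shows "infected x R n (cap x R n G c k) l \<subseteq> infected x R n (cap x R n G c (Suc k)) l"
proof
  fix i assume "i \<in> infected x R n (cap x R n G c k) l"
  then have i: "i < n" "cap x R n G c k i \<in> DA x R l" by (auto simp: infected_def)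
  have c: "c i \<in> capD x R" using assms i by auto
  have m1: "comp 1 (cap x R n G c (Suc k) i) \<le> comp 1 (cap x R n G c k i)"
    by (rule cap_mono_Suc[where c=c and j=i, OF c]) auto
  have m2: "comp 2 (cap x R n G c (Suc k) i) \<le> comp 2 (cap x R n G c k i)"
    by (rule cap_mono_Suc[where c=c and j=i, OF c]) auto
  have "cap x R n G c (Suc k) i \<in> DA x R l"
    using DA_down[of "fst (cap x R n G c k i)" "snd (cap x R n G c k i)" x R l
        "fst (cap x R n G c (Suc k) i)" "snd (cap x R n G c (Suc k) i)"] i(2) m1 m2 cap_capD[where c=c and j=i, OF c]
    by (auto simp: comp_def)
  then show "i \<in> infected x R n (cap x R n G c (Suc k)) l" using i by (auto simp: infected_def)
qed

lemma infected_mono: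
  assumes "\<forall>i<n. c i \<in> capD x R" "l \<in> {1,2}" "k \<le> k'"
  shows "infected x R n (cap x R n G c k) l \<subseteq> infected x R n (cap x R n G c k') l"
  using assms(3)
proof (induction k' rule: dec_induct)
  case base then show ?case by simp
next
  case (step m) then show ?case using infected_mono_Suc[OF assms(1,2), of G m] by auto
qed

lemma infected_finite: "finite (infected x R n cp l)"
  by (auto simp: infected_def)

lemma hits_lower:
  assumes "\<forall>i<n. c i \<in> capD x R" "l \<in> {1,2}"
  shows "comp l (cap x R n G c (Suc k) j) \<ge> comp l (c j)
          - int (card {i \<in> infected x R n (cap x R n G c k) l. G (l, i, j)})"
proof (induction k)
  case 0
  have "comp l (cap x R n G c (Suc 0) j) = max x (comp l (c j)
     - int (card {i \<in> infected x R n (cap x R n G c 0) l - {}. G (l, i, j)}))"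
    using comp_cap_Suc[OF assms(2), of x R n G c 0 j] by simp
  then show ?case by simp
next
  case (Suc k)
  let ?S = "infected x R n (cap x R n G c k) l"
  let ?S' = "infected x R n (cap x R n G c (Suc k)) l"
  have sub: "?S \<subseteq> ?S'" using infected_mono_Suc[OF assms] .
  have eq: "comp l (cap x R n G c (Suc (Suc k)) j) = max x (comp l (cap x R n G c (Suc k) j)
     - int (card {i \<in> ?S' - ?S. G (l, i, j)}))"
    using comp_cap_Suc[OF assms(2), of x R n G c "Suc k" j] by (simp add: snd_contagion_Suc)
  have "{i \<in> ?S'. G (l, i, j)} = {i \<in> ?S. G (l, i, j)} \<union> {i \<in> ?S' - ?S. G (l, i, j)}"
    using sub by auto
  moreover have "finite {i \<in> ?S'. G (l, i, j)}" using infected_finite by auto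
  moreover have "finite {i \<in> ?S. G (l, i, j)}" using infected_finite by auto
  moreover have "finite {i \<in> ?S' - ?S. G (l, i, j)}" using infected_finite by auto
  moreover have "{i \<in> ?S. G (l, i, j)} \<inter> {i \<in> ?S' - ?S. G (l, i, j)} = {}" by auto
  ultimately have "card {i \<in> ?S'. G (l, i, j)} = card {i \<in> ?S. G (l, i, j)} + card {i \<in> ?S' - ?S. G (l, i, j)}"
    by (simp only: card_Un_disjoint)
  then show ?case using eq Suc by linarith
qed



definition Iset :: "nat \<Rightarrow> (nat \<times> nat \<times> nat) set" where
  "Iset n = {(l, i, j). l \<in> {1, 2} \<and> i < n \<and> j < n \<and> i \<noteq> j}"

definition qe :: "real \<Rightarrow> real \<Rightarrow> nat \<Rightarrow> nat \<times> nat \<times> nat \<Rightarrow> real" where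
  "qe p1 p2 n = (\<lambda>(l, i, j). min 1 ((if l = 1 then p1 else p2) / real n))"

lemma finite_Iset: "finite (Iset n)"
proof -
  have "Iset n \<subseteq> {1,2} \<times> {..<n} \<times> {..<n}" by (auto simp: Iset_def)
  then show ?thesis by (rule finite_subset) auto
qed

lemma edge_pmf_alt: "edge_pmf p1 p2 n = Pi_pmf (Iset n) False (\<lambda>e. bernoulli_pmf (qe p1 p2 n e))"
  unfolding edge_pmf_def Iset_def qe_def by (intro Pi_pmf_cong) (auto split: prod.splits)

lemma qe_range: "p1 \<ge> 0 \<Longrightarrow> p2 \<ge> 0 \<Longrightarrow> 0 \<le> qe p1 p2 n e \<and> qe p1 p2 n e \<le> 1"
  by (auto simp: qe_def split: prod.splits)

lemma edge_pmf_support: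
  assumes "G \<in> set_pmf (edge_pmf p1 p2 n)" "e \<notin> Iset n"
  shows "\<not> G e"
proof -
  have "set_pmf (edge_pmf p1 p2 n) \<subseteq> {f. \<forall>x. x \<notin> Iset n \<longrightarrow> f x = False}"
    unfolding edge_pmf_alt by (rule set_Pi_pmf_subset[OF finite_Iset])
  then show ?thesis using assms by blast
qed

lemma prob_pattern:
  assumes "E1 \<subseteq> Iset n" "E0 \<subseteq> Iset n" "E1 \<inter> E0 = {}" "p1 \<ge> 0" "p2 \<ge> 0"
  shows "measure_pmf.prob (edge_pmf p1 p2 n) {G. (\<forall>e\<in>E1. G e) \<and> (\<forall>e\<in>E0. \<not> G e)}
     = (\<Prod>e\<in>E1. qe p1 p2 n e) * (\<Prod>e\<in>E0. 1 - qe p1 p2 n e)"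
proof -
  define B where "B = (\<lambda>e. if e \<in> E1 then {True} else if e \<in> E0 then {False} else (UNIV :: bool set))"
  have fin1: "finite E1" and fin0: "finite E0" using assms(1,2) finite_Iset finite_subset by blast+
  have set_eq: "{G. (\<forall>e\<in>E1. G e) \<and> (\<forall>e\<in>E0. \<not> G e)} = Pi (Iset n) B"
  proof (intro equalityI subsetI)
    fix G assume "G \<in> {G. (\<forall>e\<in>E1. G e) \<and> (\<forall>e\<in>E0. \<not> G e)}"
    then show "G \<in> Pi (Iset n) B" unfolding B_def Pi_def by auto
  next
    fix G assume G: "G \<in> Pi (Iset n) B"
    have "G e" if "e \<in> E1" for e
    proof -
      have "e \<in> Iset n" using that assms(1) by blast
      then have "G e \<in> B e" by (rule Pi_mem[OF G])
      then show ?thesis using that by (simp add: B_def)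
    qed
    moreover have "\<not> G e" if "e \<in> E0" for e
    proof -
      have "e \<in> Iset n" using that assms(2) by blast
      then have "G e \<in> B e" by (rule Pi_mem[OF G])
      moreover have "e \<notin> E1" using that assms(3) by blast
      ultimately show ?thesis using that by (simp add: B_def)
    qed
    ultimately show "G \<in> {G. (\<forall>e\<in>E1. G e) \<and> (\<forall>e\<in>E0. \<not> G e)}" by auto
  qed
  have pe: "measure_pmf.prob (bernoulli_pmf (qe p1 p2 n e)) (B e) =
      (if e \<in> E1 then qe p1 p2 n e else if e \<in> E0 then 1 - qe p1 p2 n e else 1)" for e
    using qe_range[OF assms(4,5), of n e]
    by (auto simp: B_def measure_pmf_single)
  have "measure_pmf.prob (edge_pmf p1 p2 n) {G. (\<forall>e\<in>E1. G e) \<and> (\<forall>e\<in>E0. \<not> G e)}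
     = (\<Prod>e\<in>Iset n. (if e \<in> E1 then qe p1 p2 n e else if e \<in> E0 then 1 - qe p1 p2 n e else 1))"
    unfolding set_eq edge_pmf_alt by (subst measure_Pi_pmf_Pi[OF finite_Iset]) (simp add: pe)
  also have "\<dots> = (\<Prod>e\<in>E1 \<union> E0. (if e \<in> E1 then qe p1 p2 n e else if e \<in> E0 then 1 - qe p1 p2 n e else 1))"
    by (rule prod.mono_neutral_right) (use assms(1,2) finite_Iset in auto)
  also have "\<dots> = (\<Prod>e\<in>E1. (if e \<in> E1 then qe p1 p2 n e else if e \<in> E0 then 1 - qe p1 p2 n e else 1))
       * (\<Prod>e\<in>E0. (if e \<in> E1 then qe p1 p2 n e else if e \<in> E0 then 1 - qe p1 p2 n e else 1))"
    by (rule prod.union_disjoint) (use fin1 fin0 assms(3) in auto)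
  also have "\<dots> = (\<Prod>e\<in>E1. qe p1 p2 n e) * (\<Prod>e\<in>E0. 1 - qe p1 p2 n e)"
    using assms(3) by (auto intro!: arg_cong2[where f="(*)"] prod.cong)
  finally show ?thesis .
qed

lemma prob_all_edges:
  assumes "E1 \<subseteq> Iset n" "p1 \<ge> 0" "p2 \<ge> 0" "p1 \<le> lam" "p2 \<le> lam" "n > 0"
  shows "measure_pmf.prob (edge_pmf p1 p2 n) {G. \<forall>e\<in>E1. G e} \<le> (lam / real n) ^ card E1"
proof -
  have "measure_pmf.prob (edge_pmf p1 p2 n) {G. \<forall>e\<in>E1. G e} = (\<Prod>e\<in>E1. qe p1 p2 n e)"
    using prob_pattern[OF assms(1), of "{}"] assms by simp
  also have "\<dots> \<le> (\<Prod>e\<in>E1. lam / real n)"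
  proof (rule prod_mono)
    fix e assume "e \<in> E1"
    have "qe p1 p2 n e \<le> lam / real n"
      using assms by (auto simp: qe_def divide_right_mono split: prod.splits intro: min.coboundedI2)
    then show "0 \<le> qe p1 p2 n e \<and> qe p1 p2 n e \<le> lam / real n" using qe_range assms by auto
  qed
  also have "\<dots> = (lam / real n) ^ card E1" by simp
  finally show ?thesis .
qed

lemma fact_bound: "(real k) ^ k / fact k \<le> exp (real k)"
proof -
  have s: "(\<lambda>n. real k ^ n /\<^sub>R fact n) sums exp (real k)" by (rule exp_converges)
  have "(\<Sum>n\<in>{k}. real k ^ n /\<^sub>R fact n) \<le> exp (real k)"
    using sum_le_suminf[OF sums_summable[OF s], of "{k}"] sums_unique[OF s] by auto
  then show ?thesis by (simp add: divide_inverse_commute)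
qed

lemma fact_bound2: "y ^ k / fact k \<le> (exp 1 * y / real k) ^ k" if "y \<ge> 0" "k > 0"
proof -
  have kpos: "real k > 0" using that by simp
  have "fact k \<ge> (real k) ^ k / exp (real k)"
    using fact_bound[of k] by (simp add: field_simps)
  moreover have "exp (real k) = exp 1 ^ k" by (simp add: exp_of_nat_mult[symmetric])
  ultimately have f: "fact k \<ge> (real k / exp 1) ^ k" by (simp add: power_divide)
  have pos: "(real k / exp 1) ^ k > 0" using kpos by simp
  have "y ^ k / fact k \<le> y ^ k / (real k / exp 1) ^ k"
    by (rule divide_left_mono[OF f]) (use that pos in auto)
  also have "\<dots> = (exp 1 * y / real k) ^ k" by (simp add: power_divide field_simps)
  finally show ?thesis .
qed



definition slots :: "nat set \<Rightarrow> (nat \<times> nat \<times> nat) set" where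
  "slots U = {(l, u, v). l \<in> {1, 2} \<and> u \<in> U \<and> v \<in> U \<and> u \<noteq> v}"

definition hitsIn where "hitsIn G U = {e \<in> slots U. G e}"

lemma finite_slots: "finite U \<Longrightarrow> finite (slots U)"
proof -
  assume "finite U"
  moreover have "slots U \<subseteq> {1,2} \<times> U \<times> U" by (auto simp: slots_def)
  ultimately show ?thesis using finite_subset by blast
qed

lemma slots_Iset: "U \<subseteq> {..<n} \<Longrightarrow> slots U \<subseteq> Iset n"
  by (auto simp: slots_def Iset_def)

lemma card_slots_le: "finite U \<Longrightarrow> card (slots U) \<le> 2 * card U ^ 2"
proof -
  assume f: "finite U"
  have ss: "slots U \<subseteq> {1,2} \<times> U \<times> U" by (auto simp: slots_def)
  have "card (slots U) \<le> card ({1::nat,2} \<times> U \<times> U)" by (rule card_mono[OF _ ss]) (use f in auto)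
  also have "\<dots> = 2 * card U ^ 2" by (simp add: card_cartesian_product power2_eq_square)
  finally show ?thesis .
qed

lemma final_S_eq: "final_S x R n G c l = (\<Union>k. infected x R n (cap x R n G c k) l)"
  by (simp add: final_S_def)

lemma good_hits:
  assumes hc: "\<forall>i<n. c i \<in> capD x R" and x: "x \<le> -1"
    and v: "c v = (1, 1)"
    and inf: "v \<in> infected x R n (cap x R n G c (Suc k)) 1 \<union> infected x R n (cap x R n G c (Suc k)) 2"
  shows "2 \<le> card {i \<in> infected x R n (cap x R n G c k) 1. G (1, i, v)}
            + card {i \<in> infected x R n (cap x R n G c k) 2. G (2, i, v)}"
proof -
  let ?c = "cap x R n G c (Suc k) v"
  have vn: "v < n" using inf by (auto simp: infected_def)
  have cv: "c v \<in> capD x R" using hc vn by auto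
  have h1: "comp 1 ?c \<ge> comp 1 (c v) - int (card {i \<in> infected x R n (cap x R n G c k) 1. G (1, i, v)})"
    by (rule hits_lower[OF hc]) simp
  have h2: "comp 2 ?c \<ge> comp 2 (c v) - int (card {i \<in> infected x R n (cap x R n G c k) 2. G (2, i, v)})"
    by (rule hits_lower[OF hc]) simp
  have "x \<le> comp 1 ?c \<and> comp 1 ?c \<le> comp 1 (c v)" by (rule cap_bounds[where c=c and j=v, OF cv]) simp
  then have b1: "comp 1 ?c \<le> comp 1 (c v)" by blast
  have "x \<le> comp 2 ?c \<and> comp 2 ?c \<le> comp 2 (c v)" by (rule cap_bounds[where c=c and j=v, OF cv]) simp
  then have b2: "comp 2 ?c \<le> comp 2 (c v)" by blast
  have "?c \<in> DA x R 1 \<or> ?c \<in> DA x R 2" using inf by (auto simp: infected_def)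
  then have "fst ?c + snd ?c \<le> 0"
    using b1 b2 v x by (auto simp: DA_def comp_def)
  then show ?thesis using h1 h2 v by (simp add: comp_def)
qed

lemma good_not_0:
  assumes "c v = (1, 1)" "x \<le> -1"
  shows "v \<notin> infected x R n (cap x R n G c 0) l"
  using assms by (auto simp: infected_def DA_def)

lemma card_fiber:
  assumes "finite A1" "finite A2"
  shows "card ((\<lambda>u. (1::nat, u, v)) ` A1 \<union> (\<lambda>u. (2, u, v)) ` A2) = card A1 + card A2"
proof -
  have "card ((\<lambda>u. (1::nat, u, v)) ` A1 \<union> (\<lambda>u. (2, u, v)) ` A2)
      = card ((\<lambda>u. (1::nat, u, v)) ` A1) + card ((\<lambda>u. (2::nat, u, v)) ` A2)"
    by (rule card_Un_disjoint) (use assms in auto)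
  also have "\<dots> = card A1 + card A2"
    by (subst card_image, simp add: inj_on_def)+ simp
  finally show ?thesis .
qed

lemma exists_big_U:
  assumes hc: "\<forall>i<n. c i \<in> capD x R" and x: "x \<le> -1"
    and noloop: "\<And>l i. \<not> G (l, i, i)"
    and big: "a0 \<le> card ((final_S x R n G c 1 \<union> final_S x R n G c 2) \<inter> {i. i < n \<and> c i = (1, 1)})"
  shows "\<exists>U. U \<subseteq> {..<n} \<and> card U = card ({..<n} - {i. i < n \<and> c i = (1, 1)}) + a0
     \<and> 2 * a0 \<le> card (hitsIn G U)"
proof -
  define Good where "Good = {i. i < n \<and> c i = (1, 1)}"
  define Bd where "Bd = {..<n} - Good"
  define I where "I = (\<lambda>k. infected x R n (cap x R n G c k) 1 \<union> infected x R n (cap x R n G c k) 2)"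
  define Gd where "Gd = (\<lambda>k. I k \<inter> Good)"
  have finGood: "finite Good" by (auto simp: Good_def)
  have finBd: "finite Bd" by (auto simp: Bd_def)
  have Imono: "I k \<subseteq> I k'" if "k \<le> k'" for k k'
    using infected_mono[OF hc, of 1 k k' G] infected_mono[OF hc, of 2 k k' G] that by (auto simp: I_def)
  have Iless: "I k \<subseteq> {..<n}" for k by (auto simp: I_def infected_def)
  define X where "X = (final_S x R n G c 1 \<union> final_S x R n G c 2) \<inter> Good"
  have X_eq: "X = (\<Union>k. Gd k)" by (auto simp: X_def Gd_def I_def final_S_eq)
  have finX: "finite X" using finGood by (auto simp: X_def)
  obtain K where XK: "X \<subseteq> Gd K"
  proof -
    have "\<forall>i\<in>X. \<exists>k. i \<in> Gd k" using X_eq by auto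
    then obtain f where f: "\<forall>i\<in>X. i \<in> Gd (f i)" by metis
    define K where "K = Max (insert 0 (f ` X))"
    have "f i \<le> K" if "i \<in> X" for i using finX that by (auto simp: K_def)
    then have "X \<subseteq> Gd K" using f Imono unfolding Gd_def by (meson IntD1 IntD2 IntI subsetD subsetI)
    then show ?thesis using that by blast
  qed
  have finGd: "finite (Gd k)" for k using finGood by (auto simp: Gd_def)
  have "a0 \<le> card (Gd K)"
    using big card_mono[OF finGd XK] by (simp add: X_def Good_def)
  then have ex: "\<exists>k. a0 \<le> card (Gd k)" by blast
  define k where "k = (LEAST k. a0 \<le> card (Gd k))"
  have k1: "a0 \<le> card (Gd k)" unfolding k_def by (rule LeastI_ex[OF ex])
  show ?thesis
  proof (cases k)
    case 0
    have "Gd 0 = {}" using good_not_0[OF _ x] by (auto simp: Gd_def I_def Good_def)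
    then have "a0 = 0" using k1 0 by simp
    moreover have "card Bd = card ({..<n} - Good)" by (simp add: Bd_def)
    ultimately show ?thesis
      by (intro exI[of _ Bd]) (auto simp: Bd_def Good_def)
  next
    case (Suc k')
    have lt: "card (Gd k') < a0"
    proof (rule ccontr)
      assume "\<not> card (Gd k') < a0"
      then have "k \<le> k'" unfolding k_def by (intro Least_le) simp
      then show False using Suc by simp
    qed
    have sub: "Gd k' \<subseteq> Gd k" using Imono[of k' k] Suc by (auto simp: Gd_def)
    have "a0 - card (Gd k') \<le> card (Gd k - Gd k')"
      using k1 card_Diff_subset[OF finGd sub] card_mono[OF finGd sub] by simp
    then obtain T' where T': "T' \<subseteq> Gd k - Gd k'" "card T' = a0 - card (Gd k')" "finite T'"
      by (rule obtain_subset_with_card_n)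
    define T where "T = Gd k' \<union> T'"
    have cardT: "card T = a0"
    proof -
      have "Gd k' \<inter> T' = {}" using T'(1) by blast
      then have "card T = card (Gd k') + card T'" unfolding T_def using finGd[of k'] T'(3) by (simp add: card_Un_disjoint)
      then show ?thesis using T'(2) lt by simp
    qed
    have TGood: "T \<subseteq> Good" using T' by (auto simp: T_def Gd_def)
    have TGd: "T \<subseteq> Gd k" using T' sub by (auto simp: T_def)
    define U where "U = Bd \<union> T"
    have finT: "finite T" using T'(3) finGd by (simp add: T_def)
    have cardU: "card U = card Bd + a0"
    proof -
      have "Bd \<inter> T = {}" using TGood by (auto simp: Bd_def)
      then show ?thesis unfolding U_def using finBd finT cardT by (simp add: card_Un_disjoint)
    qed
    have Usub: "U \<subseteq> {..<n}" using TGood by (auto simp: U_def Bd_def Good_def)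
    have finU: "finite U" using finBd finT by (simp add: U_def)
    have Ik': "I k' \<subseteq> U"
    proof
      fix i assume "i \<in> I k'"
      then show "i \<in> U" using Iless[of k'] by (cases "i \<in> Good") (auto simp: U_def Bd_def T_def Gd_def)
    qed
    define fib where "fib = (\<lambda>v. (\<lambda>u. (1::nat, u, v)) ` {i \<in> infected x R n (cap x R n G c k') 1. G (1, i, v)}
        \<union> (\<lambda>u. (2, u, v)) ` {i \<in> infected x R n (cap x R n G c k') 2. G (2, i, v)})"
    have fibsub: "fib v \<subseteq> hitsIn G U" if "v \<in> T" for v
    proof -
      have vU: "v \<in> U" using that by (simp add: U_def)
      show ?thesis
        using Ik' vU noloop by (auto simp: fib_def hitsIn_def slots_def I_def)
    qed
    have finfib: "finite (fib v)" for v by (simp add: fib_def infected_finite)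
    have cfib: "2 \<le> card (fib v)" if "v \<in> T" for v
    proof -
      have vG: "v \<in> Gd (Suc k')" using that TGd Suc by auto
      have "c v = (1, 1)" using vG by (simp add: Gd_def Good_def)
      moreover have "v \<in> I (Suc k')" using vG by (simp add: Gd_def)
      ultimately have h: "2 \<le> card {i \<in> infected x R n (cap x R n G c k') 1. G (1, i, v)}
            + card {i \<in> infected x R n (cap x R n G c k') 2. G (2, i, v)}"
        using good_hits[OF hc x, of v G k'] unfolding I_def by blast
      have "card (fib v) = card {i \<in> infected x R n (cap x R n G c k') 1. G (1, i, v)}
            + card {i \<in> infected x R n (cap x R n G c k') 2. G (2, i, v)}"
        unfolding fib_def by (rule card_fiber) (simp_all add: infected_finite)
      then show ?thesis using h by linarith
    qed
    have disj: "\<forall>v\<in>T. \<forall>w\<in>T. v \<noteq> w \<longrightarrow> fib v \<inter> fib w = {}" by (auto simp: fib_def)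
    have "2 * a0 = (\<Sum>v\<in>T. 2)" using cardT by simp
    also have "\<dots> \<le> (\<Sum>v\<in>T. card (fib v))" by (rule sum_mono) (rule cfib)
    also have "\<dots> = card (\<Union>v\<in>T. fib v)" by (rule card_UN_disjoint[symmetric]) (use finT finfib disj in auto)
    also have "\<dots> \<le> card (hitsIn G U)"
      by (rule card_mono) (use fibsub finU finite_slots in \<open>auto simp: hitsIn_def\<close>)
    finally have "2 * a0 \<le> card (hitsIn G U)" .
    then show ?thesis using cardU Usub by (auto simp: Bd_def Good_def)
  qed
qed



lemma union_bound:
  fixes M :: "'a pmf"
  assumes "finite I" "\<And>i. i \<in> I \<Longrightarrow> measure_pmf.prob M (A i) \<le> b"
  shows "measure_pmf.prob M (\<Union>i\<in>I. A i) \<le> real (card I) * b"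
proof -
  have "measure_pmf.prob M (\<Union>i\<in>I. A i) \<le> (\<Sum>i\<in>I. measure_pmf.prob M (A i))"
    by (rule measure_pmf.finite_measure_subadditive_finite) (use assms in auto)
  also have "\<dots> \<le> (\<Sum>i\<in>I. b)" by (rule sum_mono) (use assms in auto)
  finally show ?thesis by simp
qed

lemma choose_le_pow_fact: "real (N choose K) \<le> real N ^ K / fact K"
proof -
  have "(N choose K) * fact K \<le> N ^ K" by (rule binomial_fact_pow)
  then have "real (N choose K) * fact K \<le> real N ^ K"
    by (metis of_nat_fact of_nat_le_iff of_nat_mult of_nat_power)
  then show ?thesis by (simp add: field_simps)
qed

lemma prob_dense_set:
  assumes "p1 \<ge> 0" "p2 \<ge> 0" "p1 \<le> lam" "p2 \<le> lam" "n > 0"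
  shows "measure_pmf.prob (edge_pmf p1 p2 n) {G. \<exists>U. U \<subseteq> {..<n} \<and> card U = m \<and> K \<le> card (hitsIn G U)}
     \<le> real (n choose m) * (real (2 * m ^ 2) ^ K / fact K * (lam / real n) ^ K)"
proof -
  define UU where "UU = {U. U \<subseteq> {..<n} \<and> card U = m}"
  define EE where "EE = (\<lambda>U. {E. E \<subseteq> slots U \<and> card E = K})"
  have sub: "{G. \<exists>U. U \<subseteq> {..<n} \<and> card U = m \<and> K \<le> card (hitsIn G U)}
      \<subseteq> (\<Union>U\<in>UU. \<Union>E\<in>EE U. {G. \<forall>e\<in>E. G e})"
  proof
    fix G assume "G \<in> {G. \<exists>U. U \<subseteq> {..<n} \<and> card U = m \<and> K \<le> card (hitsIn G U)}"
    then obtain U where U: "U \<subseteq> {..<n}" "card U = m" "K \<le> card (hitsIn G U)" by auto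
    obtain E where E: "E \<subseteq> hitsIn G U" "card E = K" "finite E"
      using obtain_subset_with_card_n[OF U(3)] by blast
    have "U \<in> UU" using U by (simp add: UU_def)
    moreover have "E \<in> EE U" using E by (auto simp: EE_def hitsIn_def)
    moreover have "\<forall>e\<in>E. G e" using E by (auto simp: hitsIn_def)
    ultimately show "G \<in> (\<Union>U\<in>UU. \<Union>E\<in>EE U. {G. \<forall>e\<in>E. G e})" by blast
  qed
  have finUU: "finite UU" unfolding UU_def by (rule finite_subset[of _ "Pow {..<n}"]) auto
  have cardUU: "card UU = n choose m"
  proof -
    have "UU = {B. B \<subseteq> {..<n} \<and> card B = m}" by (simp add: UU_def)
    then show ?thesis using n_subsets[of "{..<n}" m] by simp
  qed
  have inner: "measure_pmf.prob (edge_pmf p1 p2 n) (\<Union>E\<in>EE U. {G. \<forall>e\<in>E. G e})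
      \<le> real (2 * m ^ 2) ^ K / fact K * (lam / real n) ^ K" if "U \<in> UU" for U
  proof -
    have U: "U \<subseteq> {..<n}" "card U = m" using that by (auto simp: UU_def)
    have finU: "finite U" using U(1) finite_subset by blast
    have finS: "finite (slots U)" by (rule finite_slots[OF finU])
    have finEE: "finite (EE U)" unfolding EE_def by (rule finite_subset[of _ "Pow (slots U)"]) (use finS in auto)
    have cardEE: "card (EE U) = card (slots U) choose K"
      using n_subsets[OF finS, of K] by (simp add: EE_def)
    have each: "measure_pmf.prob (edge_pmf p1 p2 n) {G. \<forall>e\<in>E. G e} \<le> (lam / real n) ^ K" if "E \<in> EE U" for E
    proof -
      have "E \<subseteq> Iset n" using that slots_Iset[OF U(1)] by (auto simp: EE_def)
      from prob_all_edges[OF this assms] show ?thesis using that by (simp add: EE_def)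
    qed
    have "measure_pmf.prob (edge_pmf p1 p2 n) (\<Union>E\<in>EE U. {G. \<forall>e\<in>E. G e}) \<le> real (card (EE U)) * (lam / real n) ^ K"
      by (rule union_bound[OF finEE each])
    also have "\<dots> \<le> real (2 * m ^ 2) ^ K / fact K * (lam / real n) ^ K"
    proof (rule mult_right_mono)
      have "real (card (EE U)) \<le> real (card (slots U)) ^ K / fact K"
        unfolding cardEE by (rule choose_le_pow_fact)
      also have "\<dots> \<le> real (2 * m ^ 2) ^ K / fact K"
      proof -
        have "card (slots U) \<le> 2 * m ^ 2" using card_slots_le[OF finU] U(2) by simp
        then have "real (card (slots U)) \<le> real (2 * m ^ 2)" by (simp only: of_nat_le_iff)
        then have "real (card (slots U)) ^ K \<le> real (2 * m ^ 2) ^ K" by (rule power_mono) simp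
        then show ?thesis by (rule divide_right_mono) simp
      qed
      finally show "real (card (EE U)) \<le> real (2 * m ^ 2) ^ K / fact K" .
      show "0 \<le> (lam / real n) ^ K" using assms by simp
    qed
    finally show ?thesis .
  qed
  have "measure_pmf.prob (edge_pmf p1 p2 n) {G. \<exists>U. U \<subseteq> {..<n} \<and> card U = m \<and> K \<le> card (hitsIn G U)}
      \<le> measure_pmf.prob (edge_pmf p1 p2 n) (\<Union>U\<in>UU. \<Union>E\<in>EE U. {G. \<forall>e\<in>E. G e})"
    by (rule measure_pmf.finite_measure_mono[OF sub]) simp
  also have "\<dots> \<le> real (card UU) * (real (2 * m ^ 2) ^ K / fact K * (lam / real n) ^ K)"
    by (rule union_bound[OF finUU inner])
  finally show ?thesis by (simp add: cardUU)
qed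



lemma est_b:
  fixes lam th :: real and n m K :: nat
  assumes lam: "lam > 0" and n: "n > 0" and m: "m \<ge> 1" and mth: "real m \<le> th * real n"
    and K: "3 * m \<le> 2 * K"
    and C: "exp 1 ^ 2 * (4 * exp 1 / 3) ^ 3 * lam ^ 3 * th \<le> 1 / 4"
    and z: "(4 * exp 1 / 3) * lam * th \<le> 1"
  shows "real (n choose m) * (real (2 * m ^ 2) ^ K / fact K * (lam / real n) ^ K) \<le> (1/2) ^ m"
proof -
  define e where "e = exp (1::real)"
  have e0: "e > 0" by (simp add: e_def)
  have Kpos: "K > 0" using K m by linarith
  have rn: "real n > 0" using n by simp
  have rm: "real m > 0" using m by simp
  have rK: "real K > 0" using Kpos by simp
  define A where "A = (e * real n / real m) ^ m"
  define w where "w = e * (real (2 * m ^ 2) * lam / real n) / real K"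
  have A0: "A \<ge> 0" using e0 rn rm by (simp add: A_def)
  have w0: "w \<ge> 0" using e0 lam rn rK by (simp add: w_def)
  have c1: "real (n choose m) \<le> A"
  proof -
    have "real (n choose m) \<le> real n ^ m / fact m" by (rule choose_le_pow_fact)
    also have "\<dots> \<le> A" unfolding A_def e_def using fact_bound2[of "real n" m] m by simp
    finally show ?thesis .
  qed
  have c2: "real (2 * m ^ 2) ^ K / fact K * (lam / real n) ^ K \<le> w ^ K"
  proof -
    have "real (2 * m ^ 2) ^ K / fact K * (lam / real n) ^ K = (real (2 * m ^ 2) * lam / real n) ^ K / fact K"
      by (simp add: power_mult_distrib power_divide)
    also have "\<dots> \<le> w ^ K" unfolding w_def e_def
      by (rule fact_bound2) (use lam rn Kpos in auto)
    finally show ?thesis .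
  qed
  have wle: "w \<le> (4 * e / 3) * lam * (real m / real n)"
  proof -
    have "3 * real m \<le> 2 * real K" using K by linarith
    then have "real (2 * m ^ 2) / real K \<le> 4 / 3 * real m"
      using rK rm by (simp add: field_simps power2_eq_square)
    then have "e * lam / real n * (real (2 * m ^ 2) / real K) \<le> e * lam / real n * (4 / 3 * real m)"
      by (rule mult_left_mono) (use e0 lam rn in auto)
    then show ?thesis by (simp add: w_def field_simps)
  qed
  have mn: "real m / real n \<le> th" using mth rn by (simp add: field_simps)
  have w1: "w \<le> 1"
  proof -
    have "(4 * e / 3) * lam * (real m / real n) \<le> (4 * e / 3) * lam * th"
      by (rule mult_left_mono[OF mn]) (use e0 lam in auto)
    moreover have "(4 * e / 3) * lam * th \<le> 1" using z by (simp add: e_def)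
    ultimately show ?thesis using wle by linarith
  qed
  define T where "T = real (n choose m) * (real (2 * m ^ 2) ^ K / fact K * (lam / real n) ^ K)"
  have T0: "T \<ge> 0" unfolding T_def using lam rn by simp
  have TA: "T \<le> A * w ^ K" unfolding T_def
    by (rule mult_mono[OF c1 c2]) (use A0 lam rn in auto)
  have "T ^ 2 \<le> (A * w ^ K) ^ 2" by (rule power_mono[OF TA T0])
  also have "\<dots> = A ^ 2 * w ^ (2 * K)" by (simp add: power_mult_distrib power_mult[symmetric] mult.commute)
  also have "\<dots> \<le> A ^ 2 * w ^ (3 * m)"
    by (rule mult_left_mono[OF power_decreasing[OF K w0 w1]]) simp
  also have "\<dots> = ((e * real n / real m) ^ 2 * w ^ 3) ^ m"
    by (simp add: A_def power_mult_distrib power_mult[symmetric] mult.commute)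
  also have "\<dots> \<le> ((1/2) ^ 2) ^ m"
  proof (rule power_mono)
    have "w ^ 3 \<le> ((4 * e / 3) * lam * (real m / real n)) ^ 3" by (rule power_mono[OF wle w0])
    then have "(e * real n / real m) ^ 2 * w ^ 3 \<le> (e * real n / real m) ^ 2 * ((4 * e / 3) * lam * (real m / real n)) ^ 3"
      by (rule mult_left_mono) simp
    also have "\<dots> = e ^ 2 * (4 * e / 3) ^ 3 * lam ^ 3 * (real m / real n)"
      using rn rm by (simp add: field_simps power2_eq_square power3_eq_cube)
    also have "\<dots> \<le> e ^ 2 * (4 * e / 3) ^ 3 * lam ^ 3 * th"
      by (rule mult_left_mono[OF mn]) (use e0 lam in auto)
    also have "\<dots> \<le> (1/2)^2" using C by (simp add: e_def power2_eq_square)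
    finally show "(e * real n / real m) ^ 2 * w ^ 3 \<le> (1/2)^2" .
    show "0 \<le> (e * real n / real m) ^ 2 * w ^ 3" using w0 by simp
  qed
  also have "\<dots> = ((1/2) ^ m) ^ 2" by (simp add: power_mult[symmetric] mult.commute)
  finally have "T ^ 2 \<le> ((1/2) ^ m) ^ 2" .
  then have "T \<le> (1/2) ^ m" by (rule power2_le_imp_le) simp
  then show ?thesis by (simp add: T_def)
qed



lemma prob_mono_supp:
  fixes M :: "'a pmf"
  assumes "\<And>z. z \<in> set_pmf M \<Longrightarrow> z \<in> A \<Longrightarrow> z \<in> B"
  shows "measure_pmf.prob M A \<le> measure_pmf.prob M B"
proof -
  have "measure_pmf.prob M A = measure_pmf.prob M (A \<inter> set_pmf M)" by (simp add: measure_Int_set_pmf)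
  also have "\<dots> \<le> measure_pmf.prob M B" by (rule measure_pmf.finite_measure_mono) (use assms in auto)
  finally show ?thesis .
qed

lemma prob_ge_compl:
  fixes M :: "'a pmf"
  assumes "\<And>z. z \<in> set_pmf M \<Longrightarrow> z \<notin> A \<Longrightarrow> z \<in> B"
  shows "measure_pmf.prob M A \<ge> 1 - measure_pmf.prob M B"
proof -
  have "measure_pmf.prob M (UNIV - A) \<le> measure_pmf.prob M B" by (rule prob_mono_supp) (use assms in auto)
  moreover have "measure_pmf.prob M (UNIV - A) = 1 - measure_pmf.prob M A"
    using measure_pmf.prob_compl[of A M] by simp
  ultimately show ?thesis by simp
qed

lemma to_one:
  fixes P b :: "nat \<Rightarrow> real"
  assumes "eventually (\<lambda>n. 1 - b n \<le> P n) sequentially" "\<And>n. P n \<le> 1" "b \<longlonglongrightarrow> 0"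
  shows "P \<longlonglongrightarrow> 1"
proof (rule tendsto_sandwich[OF assms(1)])
  show "eventually (\<lambda>n. P n \<le> 1) sequentially" using assms(2) by simp
  show "(\<lambda>n. 1 - b n) \<longlonglongrightarrow> 1" using tendsto_diff[OF tendsto_const assms(3), of 1] by simp
qed simp

lemma half_pow_floor:
  fixes th :: real assumes "th > 0"
  shows "(\<lambda>n. (1/2::real) ^ nat \<lfloor>th * real n\<rfloor>) \<longlonglongrightarrow> 0"
proof -
  have lim: "filterlim (\<lambda>n. nat \<lfloor>th * real n\<rfloor>) at_top sequentially"
  proof (subst filterlim_at_top, intro allI)
    fix Z :: nat
    obtain N :: nat where N: "real N > (real Z + 1) / th" using reals_Archimedean2 by blast
    show "eventually (\<lambda>n. Z \<le> nat \<lfloor>th * real n\<rfloor>) sequentially"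
    proof (rule eventually_sequentiallyI[of N])
      fix n assume "N \<le> n"
      then have "real n > (real Z + 1) / th" using N by linarith
      then have "th * real n > real Z + 1" using assms by (simp add: field_simps)
      then show "Z \<le> nat \<lfloor>th * real n\<rfloor>" by linarith
    qed
  qed
  have "(\<lambda>k. (1/2::real) ^ k) \<longlonglongrightarrow> 0" by (rule LIMSEQ_realpow_zero) auto
  from filterlim_compose[OF this lim] show ?thesis by simp
qed

lemma Q_fst:
  assumes "map_pmf fst Q = return_pmf c0" "z \<in> set_pmf Q"
  shows "fst z = c0"
proof -
  have "fst z \<in> set_pmf (map_pmf fst Q)" using assms(2) by simp
  then show ?thesis using assms(1) by simp
qed

lemma noloop_supp:
  assumes "G \<in> set_pmf (edge_pmf p1 p2 n)"
  shows "\<not> G (l, i, i)"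
  by (rule edge_pmf_support[OF assms]) (simp add: Iset_def)



lemma shock_facts:
  assumes sh: "shocked x R (return_pmf (1, 1)) Q"
  shows "measure_pmf.prob (map_pmf snd Q) {(u, v). u \<le> 1 \<and> v \<le> 1} = 1"
    and "measure_pmf.prob (map_pmf snd Q) {(u, v). u \<le> 0 \<and> v \<le> 1} \<le> measure_pmf.prob Q {(c, c'). c' \<noteq> c}"
    and "measure_pmf.prob (map_pmf snd Q) {(u, v). u \<le> 1 \<and> v \<le> 0} \<le> measure_pmf.prob Q {(c, c'). c' \<noteq> c}"
proof -
  have f: "map_pmf fst Q = return_pmf (1, 1)" using sh by (simp add: shocked_def)
  have one: "measure_pmf.prob Q {(c, c'). fst c' \<le> fst c \<and> snd c' \<le> snd c} = 1" using sh by (simp add: shocked_def)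
  have "measure_pmf.prob Q {(c, c'). fst c' \<le> fst c \<and> snd c' \<le> snd c} \<le> measure_pmf.prob Q (snd -` {(u, v). u \<le> 1 \<and> v \<le> 1})"
  proof (rule prob_mono_supp)
    fix z assume "z \<in> set_pmf Q" "z \<in> {(c, c'). fst c' \<le> fst c \<and> snd c' \<le> snd c}"
    then show "z \<in> snd -` {(u, v). u \<le> 1 \<and> v \<le> 1}" using Q_fst[OF f, of z] by (auto simp: case_prod_beta mem_Times_iff)
  qed
  then show "measure_pmf.prob (map_pmf snd Q) {(u, v). u \<le> 1 \<and> v \<le> 1} = 1"
    using one measure_pmf.prob_le_1[of "map_pmf snd Q"] by (simp add: antisym)
  show "measure_pmf.prob (map_pmf snd Q) {(u, v). u \<le> 0 \<and> v \<le> 1} \<le> measure_pmf.prob Q {(c, c'). c' \<noteq> c}"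
    unfolding measure_map_pmf
  proof (rule prob_mono_supp)
    fix z assume "z \<in> set_pmf Q" "z \<in> snd -` {(u, v). (u::int) \<le> 0 \<and> (v::int) \<le> 1}"
    then show "z \<in> {(c, c'). c' \<noteq> c}" using Q_fst[OF f, of z] by (auto simp: case_prod_beta mem_Times_iff)
  qed
  show "measure_pmf.prob (map_pmf snd Q) {(u, v). u \<le> 1 \<and> v \<le> 0} \<le> measure_pmf.prob Q {(c, c'). c' \<noteq> c}"
    unfolding measure_map_pmf
  proof (rule prob_mono_supp)
    fix z assume "z \<in> set_pmf Q" "z \<in> snd -` {(u, v). (u::int) \<le> 1 \<and> (v::int) \<le> 0}"
    then show "z \<in> {(c, c'). c' \<noteq> c}" using Q_fst[OF f, of z] by (auto simp: case_prod_beta mem_Times_iff)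
  qed
qed

lemma bad_count_eventually:
  fixes cs :: "nat \<Rightarrow> nat \<Rightarrow> int \<times> int"
  assumes lim: "has_limit_law x R cs Gl" and x: "x \<le> 0" and R: "R \<ge> 1"
    and P11: "measure_pmf.prob Gl {(u, v). u \<le> 1 \<and> v \<le> 1} = 1"
    and P01: "measure_pmf.prob Gl {(u, v). u \<le> 0 \<and> v \<le> 1} \<le> e"
    and P10: "measure_pmf.prob Gl {(u, v). u \<le> 1 \<and> v \<le> 0} \<le> e"
    and e: "e > 0"
  shows "eventually (\<lambda>n. real (card ({..<n} - {i. i < n \<and> cs n i = (1, 1)})) \<le> 3 * e * real n) sequentially"
proof -
  define cnt where "cnt = (\<lambda>a b n. card {i. i < n \<and> fst (cs n i) \<le> a \<and> snd (cs n i) \<le> b})"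
  have L: "(\<lambda>n. real (cnt a b n) / real n) \<longlonglongrightarrow> measure_pmf.prob Gl {(u, v). u \<le> a \<and> v \<le> b}"
    if "(a, b) \<in> capD x R" for a b
    using lim that unfolding has_limit_law_def cnt_def by auto
  have L11: "(\<lambda>n. real (cnt 1 1 n) / real n) \<longlonglongrightarrow> 1"
    using L[of 1 1] x R P11 by (simp add: capD_def)
  have L01: "(\<lambda>n. real (cnt 0 1 n) / real n) \<longlonglongrightarrow> measure_pmf.prob Gl {(u, v). u \<le> 0 \<and> v \<le> 1}"
    using L[of 0 1] x R by (simp add: capD_def)
  have L10: "(\<lambda>n. real (cnt 1 0 n) / real n) \<longlonglongrightarrow> measure_pmf.prob Gl {(u, v). u \<le> 1 \<and> v \<le> 0}"
    using L[of 1 0] x R by (simp add: capD_def)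
  define q where "q = measure_pmf.prob Gl {(u, v). u \<le> 0 \<and> v \<le> 1} + measure_pmf.prob Gl {(u, v). u \<le> 1 \<and> v \<le> 0}"
  have lim2: "(\<lambda>n. 1 - real (cnt 1 1 n) / real n + real (cnt 0 1 n) / real n + real (cnt 1 0 n) / real n)
      \<longlonglongrightarrow> 1 - 1 + q"
    unfolding q_def add.assoc[symmetric] by (intro tendsto_intros L11 L01 L10)
  have "1 - 1 + q < 3 * e" using P01 P10 e by (simp add: q_def)
  then have ev: "eventually (\<lambda>n. 1 - real (cnt 1 1 n) / real n + real (cnt 0 1 n) / real n + real (cnt 1 0 n) / real n < 3 * e) sequentially"
    by (rule order_tendstoD(2)[OF lim2])
  have ev0: "eventually (\<lambda>n. n > (0::nat)) sequentially" by (rule eventually_gt_at_top)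
  show ?thesis using ev ev0
  proof eventually_elim
    case (elim n)
    define Good where "Good = {i. i < n \<and> cs n i = (1, 1)}"
    define C where "C = (\<lambda>a b. {i. i < n \<and> fst (cs n i) \<le> a \<and> snd (cs n i) \<le> b})"
    have sub: "{..<n} - Good \<subseteq> ({..<n} - C 1 1) \<union> C 0 1 \<union> C 1 0"
    proof
      fix i assume i: "i \<in> {..<n} - Good"
      show "i \<in> ({..<n} - C 1 1) \<union> C 0 1 \<union> C 1 0"
      proof (cases "i \<in> C 1 1")
        case True
        have "cs n i \<noteq> (1, 1)" using i by (simp add: Good_def)
        then have "fst (cs n i) \<le> 0 \<or> snd (cs n i) \<le> 0" using True by (auto simp: C_def prod_eq_iff)
        then show ?thesis using True by (auto simp: C_def)
      qed (use i in auto)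
    qed
    have fin: "finite (C a b)" for a b by (simp add: C_def)
    have "card ({..<n} - Good) \<le> card (({..<n} - C 1 1) \<union> C 0 1 \<union> C 1 0)"
      by (rule card_mono[OF _ sub]) (simp add: fin)
    also have "\<dots> \<le> card ({..<n} - C 1 1) + card (C 0 1) + card (C 1 0)"
    proof -
      have "card (({..<n} - C 1 1) \<union> C 0 1 \<union> C 1 0) \<le> card (({..<n} - C 1 1) \<union> C 0 1) + card (C 1 0)"
        by (rule card_Un_le)
      moreover have "card (({..<n} - C 1 1) \<union> C 0 1) \<le> card ({..<n} - C 1 1) + card (C 0 1)"
        by (rule card_Un_le)
      ultimately show ?thesis by linarith
    qed
    also have "card ({..<n} - C 1 1) = n - card (C 1 1)"
      by (subst card_Diff_subset) (auto simp: fin C_def)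
    finally have c: "card ({..<n} - Good) \<le> n - cnt 1 1 n + cnt 0 1 n + cnt 1 0 n"
      by (simp add: C_def cnt_def)
    have c11: "cnt 1 1 n \<le> n"
    proof -
      have "cnt 1 1 n \<le> card {..<n}" unfolding cnt_def by (rule card_mono) auto
      then show ?thesis by simp
    qed
    have "real (card ({..<n} - Good)) \<le> real (n - cnt 1 1 n + cnt 0 1 n + cnt 1 0 n)"
      using c by (simp only: of_nat_le_iff)
    also have "\<dots> = real n - real (cnt 1 1 n) + real (cnt 0 1 n) + real (cnt 1 0 n)"
      using c11 by (simp add: of_nat_diff)
    also have "\<dots> = real n * (1 - real (cnt 1 1 n) / real n + real (cnt 0 1 n) / real n + real (cnt 1 0 n) / real n)"
      using elim(2) by (simp add: field_simps)
    also have "\<dots> \<le> real n * (3 * e)" using elim(1) by (intro mult_left_mono) auto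
    finally show ?case by (simp add: Good_def mult.commute)
  qed
qed



lemma part_b:
  fixes x R :: int and p1 p2 :: real
  assumes x: "x \<le> -1" and R: "R \<ge> 1" and p1: "p1 > 1" and p2: "p2 > 1"
  shows "resilient x R p1 p2 (return_pmf (1, 1))"
  unfolding resilient_def
proof (intro allI impI)
  fix e' :: real assume e': "e' > 0"
  define lam where "lam = max p1 p2"
  have lam: "lam > 0" "p1 \<le> lam" "p2 \<le> lam" using p1 p2 by (auto simp: lam_def)
  define D where "D = exp 1 ^ 2 * (4 * exp 1 / 3) ^ 3 * lam ^ 3"
  define Z where "Z = (4 * exp 1 / 3) * lam"
  have D0: "D > 0" using lam by (simp add: D_def)
  have Z0: "Z > 0" using lam by (simp add: Z_def)
  define th where "th = min (min (e' / 4) (1 / 2)) (min (1 / (4 * D)) (1 / Z))"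
  have th0: "th > 0" using e' D0 Z0 by (simp add: th_def)
  have thD: "D * th \<le> 1 / 4"
  proof -
    have "th \<le> 1 / (4 * D)" by (simp add: th_def)
    then have "D * th \<le> D * (1 / (4 * D))" using D0 by (intro mult_left_mono) auto
    then show ?thesis using D0 by simp
  qed
  have thZ: "Z * th \<le> 1"
  proof -
    have "th \<le> 1 / Z" by (simp add: th_def)
    then have "Z * th \<le> Z * (1 / Z)" using Z0 by (intro mult_left_mono) auto
    then show ?thesis using Z0 by simp
  qed
  have the': "4 * th \<le> e'" by (simp add: th_def)
  show "\<exists>e>0. \<forall>Q. shocked x R (return_pmf (1, 1)) Q \<and> measure_pmf.prob Q {(c, c'). c' \<noteq> c} \<le> e \<longrightarrow>
        (\<forall>cs. has_limit_law x R cs (map_pmf snd Q) \<longrightarrow>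
          (\<lambda>n. measure_pmf.prob (edge_pmf p1 p2 n)
             {G. real (card (final_S x R n G (cs n) 1) + card (final_S x R n G (cs n) 2)) \<le> e' * real n})
          \<longlonglongrightarrow> 1)"
  proof (intro exI[of _ "th / 16"] conjI allI impI)
    show "th / 16 > 0" using th0 by simp
    fix Q cs
    assume Qa: "shocked x R (return_pmf (1, 1)) Q \<and> measure_pmf.prob Q {(c, c'). c' \<noteq> c} \<le> th / 16"
    assume lim: "has_limit_law x R cs (map_pmf snd Q)"
    have sh: "shocked x R (return_pmf (1, 1)) Q" using Qa by simp
    have hc: "\<forall>n. \<forall>i<n. cs n i \<in> capD x R" using lim by (simp add: has_limit_law_def)
    have evbad: "eventually (\<lambda>n. real (card ({..<n} - {i. i < n \<and> cs n i = (1, 1)})) \<le> 3 * (th / 16) * real n) sequentially"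
      by (rule bad_count_eventually[OF lim _ R shock_facts(1)[OF sh]])
         (use x shock_facts(2,3)[OF sh] Qa th0 in auto)
    obtain N0 :: nat where N0: "real N0 \<ge> 4 / th" using real_arch_simple by blast
    have evN: "eventually (\<lambda>n. n \<ge> Suc N0) sequentially" by (rule eventually_ge_at_top)
    define m where "m = (\<lambda>n::nat. nat \<lfloor>th * real n\<rfloor>)"
    show "(\<lambda>n. measure_pmf.prob (edge_pmf p1 p2 n)
             {G. real (card (final_S x R n G (cs n) 1) + card (final_S x R n G (cs n) 2)) \<le> e' * real n})
          \<longlonglongrightarrow> 1"
    proof (rule to_one[where b="\<lambda>n. (1/2) ^ m n"])
      show "(\<lambda>n. (1/2::real) ^ m n) \<longlonglongrightarrow> 0" unfolding m_def by (rule half_pow_floor[OF th0])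
      show "measure_pmf.prob (edge_pmf p1 p2 n)
             {G. real (card (final_S x R n G (cs n) 1) + card (final_S x R n G (cs n) 2)) \<le> e' * real n} \<le> 1" for n
        by (rule measure_pmf.prob_le_1)
      show "eventually (\<lambda>n. 1 - (1/2) ^ m n \<le> measure_pmf.prob (edge_pmf p1 p2 n)
             {G. real (card (final_S x R n G (cs n) 1) + card (final_S x R n G (cs n) 2)) \<le> e' * real n}) sequentially"
        using evbad evN
      proof eventually_elim
        case (elim n)
        define Good where "Good = {i. i < n \<and> cs n i = (1, 1)}"
        define bd where "bd = card ({..<n} - Good)"
        have bd: "real bd \<le> 3 * (th / 16) * real n" using elim(1) by (simp add: bd_def Good_def)
        have npos: "n > 0" using elim(2) by simp
        have hcn: "\<forall>i<n. cs n i \<in> capD x R" using hc by blast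
        have thn: "th * real n \<ge> 4"
        proof -
          have "real n \<ge> 4 / th" using elim(2) N0 by linarith
          then show ?thesis using th0 by (simp add: field_simps)
        qed
        have m1: "real (m n) \<le> th * real n" "real (m n) \<ge> th * real n - 1"
          unfolding m_def using thn by linarith+
        have mge1: "m n \<ge> 1" using m1 thn by linarith
        have bdm: "4 * bd \<le> m n" using bd m1 thn by linarith
        define a0 where "a0 = m n - bd"
        define K where "K = 2 * a0"
        have K3: "3 * m n \<le> 2 * K" using bdm by (simp add: K_def a0_def)
        have est: "measure_pmf.prob (edge_pmf p1 p2 n) {G. \<exists>U. U \<subseteq> {..<n} \<and> card U = m n \<and> K \<le> card (hitsIn G U)}
            \<le> (1/2) ^ m n"
        proof -
          have "measure_pmf.prob (edge_pmf p1 p2 n) {G. \<exists>U. U \<subseteq> {..<n} \<and> card U = m n \<and> K \<le> card (hitsIn G U)}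
             \<le> real (n choose m n) * (real (2 * m n ^ 2) ^ K / fact K * (lam / real n) ^ K)"
            by (rule prob_dense_set) (use p1 p2 lam npos in auto)
          also have "\<dots> \<le> (1/2) ^ m n"
            by (rule est_b[OF lam(1) npos mge1 m1(1) K3])
               (use thD thZ in \<open>simp_all add: D_def Z_def mult.assoc\<close>)
          finally show ?thesis .
        qed
        have "1 - measure_pmf.prob (edge_pmf p1 p2 n) {G. \<exists>U. U \<subseteq> {..<n} \<and> card U = m n \<and> K \<le> card (hitsIn G U)}
           \<le> measure_pmf.prob (edge_pmf p1 p2 n)
             {G. real (card (final_S x R n G (cs n) 1) + card (final_S x R n G (cs n) 2)) \<le> e' * real n}"
        proof (rule prob_ge_compl)
          fix G assume G: "G \<in> set_pmf (edge_pmf p1 p2 n)"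
            and nz: "G \<notin> {G. real (card (final_S x R n G (cs n) 1) + card (final_S x R n G (cs n) 2)) \<le> e' * real n}"
          define F1 where "F1 = final_S x R n G (cs n) 1"
          define F2 where "F2 = final_S x R n G (cs n) 2"
          have big: "real (card F1 + card F2) > e' * real n" using nz by (simp add: F1_def F2_def)
          have Fsub: "F1 \<union> F2 \<subseteq> {..<n}" by (auto simp: F1_def F2_def final_S_def infected_def)
          have finF: "finite (F1 \<union> F2)" using Fsub finite_subset by blast
          have "card F1 \<le> card (F1 \<union> F2)" "card F2 \<le> card (F1 \<union> F2)"
            using finF by (auto intro: card_mono)
          then have "real (card F1 + card F2) \<le> 2 * real (card (F1 \<union> F2))" by simp
          then have cX: "real (card (F1 \<union> F2)) > 2 * th * real n"
          proof -
            have "4 * th * real n \<le> e' * real n" using the' by (intro mult_right_mono) auto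
            then show ?thesis using big \<open>real (card F1 + card F2) \<le> 2 * real (card (F1 \<union> F2))\<close> by linarith
          qed
          have "card (F1 \<union> F2) \<le> card ((F1 \<union> F2) \<inter> Good) + bd"
          proof -
            have "F1 \<union> F2 \<subseteq> ((F1 \<union> F2) \<inter> Good) \<union> ({..<n} - Good)" using Fsub by auto
            then have "card (F1 \<union> F2) \<le> card (((F1 \<union> F2) \<inter> Good) \<union> ({..<n} - Good))"
              by (rule card_mono[rotated]) (use finF in auto)
            also have "\<dots> \<le> card ((F1 \<union> F2) \<inter> Good) + card ({..<n} - Good)" by (rule card_Un_le)
            finally show ?thesis by (simp add: bd_def)
          qed
          moreover have "real (m n) \<le> real (card (F1 \<union> F2))" using cX m1(1) thn by linarith
          ultimately have "a0 \<le> card ((F1 \<union> F2) \<inter> Good)" unfolding a0_def by linarith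
          then obtain U where U: "U \<subseteq> {..<n}" "card U = bd + a0" "2 * a0 \<le> card (hitsIn G U)"
            using exists_big_U[where c="cs n" and n=n and G=G, OF hcn x noloop_supp[OF G], of a0]
            unfolding F1_def F2_def Good_def bd_def by blast
          have "bd + a0 = m n" using bdm by (simp add: a0_def)
          then show "G \<in> {G. \<exists>U. U \<subseteq> {..<n} \<and> card U = m n \<and> K \<le> card (hitsIn G U)}"
            using U by (auto simp: K_def)
        qed
        then show ?case using est by linarith
      qed
    qed
  qed
qed



lemma pow_fact_le_exp: "x \<ge> 0 \<Longrightarrow> x ^ k / fact k \<le> exp (x::real)"
proof -
  assume x: "x \<ge> 0"
  have s: "(\<lambda>n. x ^ n /\<^sub>R fact n) sums exp x" by (rule exp_converges)
  have "(\<Sum>n\<in>{k}. x ^ n /\<^sub>R fact n) \<le> exp x"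
    using sum_le_suminf[OF sums_summable[OF s], of "{k}"] sums_unique[OF s] x by auto
  then show ?thesis by (simp add: divide_inverse_commute)
qed

lemma lin_exp_to_0:
  fixes a :: real assumes a: "a > 0"
  shows "(\<lambda>n. (real n + 1) * exp (- a * real n)) \<longlonglongrightarrow> 0"
proof (rule tendsto_sandwich[where f="\<lambda>_. 0" and h="\<lambda>n. (4 / a ^ 2) * inverse (real n)"])
  show "eventually (\<lambda>n. 0 \<le> (real n + 1) * exp (- a * real n)) sequentially" by simp
  show "eventually (\<lambda>n. (real n + 1) * exp (- a * real n) \<le> (4 / a ^ 2) * inverse (real n)) sequentially"
  proof (rule eventually_sequentiallyI[of 1])
    fix n :: nat assume n: "1 \<le> n"
    have rn: "real n \<ge> 1" using n by simp
    have "(a * real n) ^ 2 / fact 2 \<le> exp (a * real n)"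
      by (rule pow_fact_le_exp) (use a rn in simp)
    then have e: "(a * real n) ^ 2 / 2 \<le> exp (a * real n)" by (simp add: numeral_2_eq_2)
    have ep: "exp (a * real n) > 0" by simp
    have "(real n + 1) * exp (- a * real n) = (real n + 1) / exp (a * real n)"
      by (simp add: exp_minus field_simps)
    also have "\<dots> \<le> (real n + 1) / ((a * real n) ^ 2 / 2)"
      by (rule divide_left_mono[OF e]) (use a rn in auto)
    also have "\<dots> \<le> (4 / a ^ 2) * inverse (real n)"
    proof -
      have "real n * 1 \<le> real n * real n" by (rule mult_left_mono) (use rn in auto)
      then have "(real n + 1) * 2 * real n \<le> 4 * real n * real n" by (simp add: algebra_simps)
      then show ?thesis using a rn by (simp add: field_simps power2_eq_square)
    qed
    finally show "(real n + 1) * exp (- a * real n) \<le> (4 / a ^ 2) * inverse (real n)" .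
  qed
  show "(\<lambda>n. (4 / a ^ 2) * inverse (real n)) \<longlonglongrightarrow> 0"
    using tendsto_mult[OF tendsto_const lim_inverse_n, of "4 / a ^ 2"] by simp
qed simp

lemma stirl_a:
  fixes p y T :: real and a :: nat
  assumes p: "p > 1" and aT: "real a \<le> T" and Ty: "T \<le> y"
  shows "(p * y) ^ a / fact a \<le> exp (T * ln p + y)"
proof (cases "a = 0")
  case True
  have "0 \<le> T * ln p + y" using p aT Ty by (smt (verit) ln_gt_zero mult_nonneg_nonneg of_nat_0_le_iff)
  then show ?thesis using True by simp
next
  case False
  have ra: "real a > 0" using False by simp
  have y0: "y > 0" using ra aT Ty by linarith
  have "(p * y) ^ a / fact a \<le> (exp 1 * (p * y) / real a) ^ a"
    by (rule fact_bound2) (use p y0 False in auto)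
  also have "\<dots> = exp (real a * ln (exp 1 * (p * y) / real a))"
  proof -
    have z: "exp 1 * (p * y) / real a > 0" using p y0 ra by simp
    show ?thesis by (simp only: exp_of_nat_mult exp_ln[OF z])
  qed
  also have "\<dots> \<le> exp (T * ln p + y)"
  proof -
    have "ln (exp 1 * (p * y) / real a) = 1 + ln p + ln (y / real a)"
      using p y0 ra by (simp add: ln_mult ln_div)
    moreover have "ln (y / real a) \<le> y / real a - 1" by (rule ln_le_minus_one) (use y0 ra in simp)
    ultimately have "real a * ln (exp 1 * (p * y) / real a) \<le> real a * (1 + ln p + (y / real a - 1))"
      using ra by simp
    also have "\<dots> = real a * ln p + y" using ra by (simp add: field_simps)
    also have "\<dots> \<le> T * ln p + y"
      using aT p by (simp add: mult_right_mono)
    finally show ?thesis by simp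
  qed
  finally show ?thesis .
qed

lemma lin_aux: "(a1::real) \<le> b1 / 2 \<Longrightarrow> b1 = y1 - t1 - x1 \<Longrightarrow> x1 + t1 + w1 - y1 + a1 \<le> - (y1 - t1 - x1) / 2 + w1"
  by (simp add: field_simps)

lemma est_a:
  fixes p d om :: real and n s a b w :: nat
  assumes p: "p > 1" and d: "4 * p * d \<le> p - 1 - ln p" and dpos: "d > 0"
    and n: "real n \<ge> p" and part: "s + b + w = n" and ab: "a \<le> b"
    and T: "real (s + a) < d * real n" and w: "real w \<le> om * real n" and om: "om \<le> d"
  shows "real (b choose a) * real (s + a + w) ^ a * (p / real n) ^ a * (1 - p / real n) ^ ((s + a) * (b - a))
     \<le> exp (- real (s + a) * (p - 1 - ln p) / 2 + real w)"
proof -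
  define T where "T = real (s + a)"
  define q where "q = p / real n"
  have rn: "real n > 0" using n p by linarith
  have q0: "0 \<le> q" "q \<le> 1" using p n rn by (auto simp: q_def field_simps)
  have T0: "T \<ge> 0" by (simp add: T_def)
  have c1: "real (b choose a) * real (s + a + w) ^ a * q ^ a \<le> exp (T * ln p + (T + real w))"
  proof -
    have "real (b choose a) \<le> real b ^ a / fact a" by (rule choose_le_pow_fact)
    also have "\<dots> \<le> real n ^ a / fact a" using part by (intro divide_right_mono power_mono) auto
    finally have "real (b choose a) * real (s + a + w) ^ a * q ^ a \<le> real n ^ a / fact a * real (s + a + w) ^ a * q ^ a"
      using q0 by (intro mult_right_mono) auto
    also have "\<dots> = (real n * q * real (s + a + w)) ^ a / fact a"
      by (simp add: power_mult_distrib mult_ac)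
    also have "\<dots> = (p * (T + real w)) ^ a / fact a"
      using rn by (simp add: q_def T_def)
    also have "\<dots> \<le> exp (T * ln p + (T + real w))"
      by (rule stirl_a[OF p]) (simp_all add: T_def)
    finally show ?thesis .
  qed
  have c2: "(1 - q) ^ ((s + a) * (b - a)) \<le> exp (- p * T * (1 - d - om))"
  proof -
    have "(1 - q) ^ ((s + a) * (b - a)) \<le> exp (- q) ^ ((s + a) * (b - a))"
      by (rule power_mono) (use q0 exp_ge_add_one_self[of "-q"] in auto)
    also have "\<dots> = exp (- q * real ((s + a) * (b - a)))" by (simp add: exp_of_nat_mult[symmetric] mult.commute)
    also have "\<dots> \<le> exp (- p * T * (1 - d - om))"
    proof -
      have ba: "real (b - a) = real n - T - real w" using part ab by (simp add: T_def of_nat_diff)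
      have "T * (real n - T - real w) \<ge> T * (real n * (1 - d - om))"
        using T w T0 by (intro mult_left_mono) (auto simp: T_def algebra_simps)
      then have "q * real ((s + a) * (b - a)) \<ge> q * (T * (real n * (1 - d - om)))"
        using q0 ba by (simp add: T_def mult_left_mono)
      also have "q * (T * (real n * (1 - d - om))) = p * T * (1 - d - om)"
        using rn by (simp add: q_def)
      finally show ?thesis by simp
    qed
    finally show ?thesis .
  qed
  have "real (b choose a) * real (s + a + w) ^ a * q ^ a * (1 - q) ^ ((s + a) * (b - a))
      \<le> exp (T * ln p + (T + real w)) * exp (- p * T * (1 - d - om))"
    by (rule mult_mono[OF c1 c2]) (use q0 in auto)
  also have "\<dots> = exp (T * ln p + T + real w - p * T * (1 - d - om))" by (simp add: exp_add[symmetric])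
  also have "\<dots> \<le> exp (- T * (p - 1 - ln p) / 2 + real w)"
  proof -
    have "p * T * (d + om) \<le> p * T * (2 * d)" using om p T0 by (intro mult_left_mono) auto
    also have "\<dots> \<le> T * (p - 1 - ln p) / 2"
    proof -
      have "(4 * p * d) / 2 \<le> (p - 1 - ln p) / 2" using divide_right_mono[OF d, of 2] by simp
      moreover have "2 * p * d = (4 * p * d) / 2" by simp
      ultimately have "2 * p * d \<le> (p - 1 - ln p) / 2" by (simp only:)
      then have "T * (2 * p * d) \<le> T * ((p - 1 - ln p) / 2)" by (rule mult_left_mono) (use T0 in auto)
      then show ?thesis by (simp add: algebra_simps)
    qed
    finally have key: "p * T * (d + om) \<le> T * (p - 1 - ln p) / 2" .
    have e1: "T * ln p + T + real w - p * T * (1 - d - om) = T * ln p + T + real w - p * T + p * T * (d + om)"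
      by (simp add: algebra_simps)
    have e2: "- T * (p - 1 - ln p) / 2 + real w = - (p * T - T - T * ln p) / 2 + real w"
      by (simp add: algebra_simps)
    have e3: "T * (p - 1 - ln p) = p * T - T - T * ln p" by (simp add: algebra_simps)
    have "T * ln p + T + real w - p * T * (1 - d - om) \<le> - T * (p - 1 - ln p) / 2 + real w"
      unfolding e1 e2 using lin_aux[OF key e3] .
    then show ?thesis by simp
  qed
  finally show ?thesis by (simp add: q_def T_def)
qed



declare contagion.simps(2)[simp del]

lemma DA0: "l \<in> {1,2} \<Longrightarrow> z \<in> capD 0 R \<Longrightarrow> (z \<in> DA 0 R l \<longleftrightarrow> comp l z \<le> 0)"
  by (cases z) (auto simp: DA_def capD_def comp_def)

lemma hits_upper:
  assumes "\<forall>i<n. c i \<in> capD x R" "l \<in> {1,2}"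
  shows "comp l (cap x R n G c (Suc k) j) \<le> max x (comp l (c j)
          - int (card {i \<in> infected x R n (cap x R n G c k) l. G (l, i, j)}))"
proof (induction k)
  case 0
  have "comp l (cap x R n G c (Suc 0) j) = max x (comp l (c j)
     - int (card {i \<in> infected x R n (cap x R n G c 0) l - {}. G (l, i, j)}))"
    using comp_cap_Suc[OF assms(2), of x R n G c 0 j] by simp
  then show ?case by simp
next
  case (Suc k)
  let ?S = "infected x R n (cap x R n G c k) l"
  let ?S' = "infected x R n (cap x R n G c (Suc k)) l"
  have sub: "?S \<subseteq> ?S'" using infected_mono_Suc[OF assms] .
  have eq: "comp l (cap x R n G c (Suc (Suc k)) j) = max x (comp l (cap x R n G c (Suc k) j)
     - int (card {i \<in> ?S' - ?S. G (l, i, j)}))"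
    using comp_cap_Suc[OF assms(2), of x R n G c "Suc k" j] by (simp add: snd_contagion_Suc)
  have "{i \<in> ?S'. G (l, i, j)} = {i \<in> ?S. G (l, i, j)} \<union> {i \<in> ?S' - ?S. G (l, i, j)}"
    using sub by auto
  moreover have "finite {i \<in> ?S. G (l, i, j)}" using infected_finite by auto
  moreover have "finite {i \<in> ?S' - ?S. G (l, i, j)}" using infected_finite by auto
  moreover have "{i \<in> ?S. G (l, i, j)} \<inter> {i \<in> ?S' - ?S. G (l, i, j)} = {}" by auto
  ultimately have "card {i \<in> ?S'. G (l, i, j)} = card {i \<in> ?S. G (l, i, j)} + card {i \<in> ?S' - ?S. G (l, i, j)}"
    by (simp only: card_Un_disjoint)
  then show ?case using eq Suc by linarith
qed

lemma seed_in:
  assumes "i < n" "comp l (c i) \<le> 0" "c i \<in> capD 0 R" "l \<in> {1,2}"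
  shows "i \<in> final_S 0 R n G c l"
proof -
  have "c i \<in> DA 0 R l" using DA0[OF assms(4,3)] assms(2) by simp
  then have "i \<in> infected 0 R n (cap 0 R n G c 0) l" using assms(1) by (simp add: infected_def)
  then show ?thesis unfolding final_S_def by blast
qed

lemma spread:
  assumes hc: "\<forall>i<n. c i \<in> capD 0 R" and l: "l \<in> {1,2}"
    and u: "u \<in> final_S 0 R n G c l" and j: "j < n" "comp l (c j) = 1" and e: "G (l, u, j)"
  shows "j \<in> final_S 0 R n G c l"
proof -
  obtain k where k: "u \<in> infected 0 R n (cap 0 R n G c k) l" using u by (auto simp: final_S_def)
  have "u \<in> {i \<in> infected 0 R n (cap 0 R n G c k) l. G (l, i, j)}" using k e by simp
  moreover have "finite {i \<in> infected 0 R n (cap 0 R n G c k) l. G (l, i, j)}" using infected_finite by simp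
  ultimately have "card {i \<in> infected 0 R n (cap 0 R n G c k) l. G (l, i, j)} > 0"
    using card_gt_0_iff by blast
  then have "card {i \<in> infected 0 R n (cap 0 R n G c k) l. G (l, i, j)} \<ge> 1" by simp
  then have "comp l (cap 0 R n G c (Suc k) j) \<le> 0"
    using hits_upper[OF hc l, of G k j] j(2) by linarith
  moreover have "cap 0 R n G c (Suc k) j \<in> capD 0 R" by (rule cap_capD) (use hc j in auto)
  ultimately have "cap 0 R n G c (Suc k) j \<in> DA 0 R l" using DA0[OF l] by blast
  then have "j \<in> infected 0 R n (cap 0 R n G c (Suc k)) l" using j by (simp add: infected_def)
  then show ?thesis by (auto simp: final_S_def)
qed

lemma needs_in:
  assumes hc: "\<forall>i<n. c i \<in> capD 0 R" and l: "l \<in> {1,2}"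
    and v: "v \<in> final_S 0 R n G c l" "comp l (c v) = 1" and noloop: "\<And>l i. \<not> G (l, i, i)"
  shows "\<exists>u\<in>final_S 0 R n G c l. u \<noteq> v \<and> G (l, u, v)"
proof -
  obtain k where k: "v \<in> infected 0 R n (cap 0 R n G c k) l" using v by (auto simp: final_S_def)
  have vn: "v < n" using k by (simp add: infected_def)
  have "cap 0 R n G c k v \<in> DA 0 R l" using k by (simp add: infected_def)
  moreover have "cap 0 R n G c k v \<in> capD 0 R" by (rule cap_capD) (use hc vn in auto)
  ultimately have le: "comp l (cap 0 R n G c k v) \<le> 0" using DA0[OF l] by blast
  show ?thesis
  proof (cases k)
    case 0 then show ?thesis using le v(2) by simp
  next
    case (Suc k')
    have "comp l (cap 0 R n G c (Suc k') v) \<ge> comp l (c v) - int (card {i \<in> infected 0 R n (cap 0 R n G c k') l. G (l, i, v)})"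
      by (rule hits_lower[OF hc l])
    then have "card {i \<in> infected 0 R n (cap 0 R n G c k') l. G (l, i, v)} \<noteq> 0" using le v(2) Suc by auto
    then have "{i \<in> infected 0 R n (cap 0 R n G c k') l. G (l, i, v)} \<noteq> {}" by (intro notI) simp
    then obtain u where u: "u \<in> infected 0 R n (cap 0 R n G c k') l" "G (l, u, v)"
      by blast
    have "u \<in> final_S 0 R n G c l" using u(1) by (auto simp: final_S_def)
    moreover have "u \<noteq> v" using u(2) noloop by auto
    ultimately show ?thesis using u(2) by blast
  qed
qed



declare contagion.simps(2)[simp del]

definition Ev where
  "Ev l S A W B G \<longleftrightarrow> (\<forall>v\<in>A. \<exists>u\<in>(S \<union> A \<union> W) - {v}. G (l, u, v)) \<and> (\<forall>u\<in>S \<union> A. \<forall>j\<in>B - A. \<not> G (l, u, j))"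

lemma prob_Ev:
  fixes p1 p2 :: real
  assumes l: "l \<in> {1,2}" and sub: "S \<union> B \<union> W \<subseteq> {..<n}" and SB: "S \<inter> B = {}" and AB: "A \<subseteq> B"
    and p: "p1 \<ge> 0" "p2 \<ge> 0" and n: "real n \<ge> (if l = 1 then p1 else p2)"
  shows "measure_pmf.prob (edge_pmf p1 p2 n) {G. Ev l S A W B G}
    \<le> real (card (S \<union> A \<union> W)) ^ card A * ((if l = 1 then p1 else p2) / real n) ^ card A
       * (1 - (if l = 1 then p1 else p2) / real n) ^ (card (S \<union> A) * card (B - A))"
proof -
  define pl where "pl = (if l = 1 then p1 else p2)"
  define U where "U = S \<union> A \<union> W"
  define FF where "FF = PiE A (\<lambda>v. U - {v})"
  define E0 where "E0 = (\<lambda>(u, j). (l, u, j)) ` ((S \<union> A) \<times> (B - A))"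
  define E1 where "E1 = (\<lambda>f::nat\<Rightarrow>nat. (\<lambda>v. (l, f v, v)) ` A)"
  define Pat where "Pat = (\<lambda>f. {G. (\<forall>e\<in>E1 f. G e) \<and> (\<forall>e\<in>E0. \<not> G e)})"
  have finA: "finite A" using sub AB by (auto intro: finite_subset[of _ "{..<n}"])
  have finU: "finite U" using sub finA by (auto simp: U_def intro: finite_subset[of _ "{..<n}"])
  have finB: "finite B" using sub by (auto intro: finite_subset[of _ "{..<n}"])
  have finS: "finite S" using sub by (auto intro: finite_subset[of _ "{..<n}"])
  have finFF: "finite FF" unfolding FF_def using finA finU by (intro finite_PiE) auto
  have cardFF: "card FF \<le> card U ^ card A"
  proof -
    have "card FF = (\<Prod>v\<in>A. card (U - {v}))" unfolding FF_def by (rule card_PiE[OF finA])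
    also have "\<dots> \<le> (\<Prod>v\<in>A. card U)" by (rule prod_mono) (use finU in \<open>auto intro: card_mono\<close>)
    finally show ?thesis by simp
  qed
  have pl0: "0 \<le> pl" "pl \<le> real n" using p n by (auto simp: pl_def)
  have qe_l: "qe p1 p2 n (l, u, v) = pl / real n" for u v
  proof -
    have "pl / real n \<le> 1"
    proof (cases "n = 0")
      case False then show ?thesis using pl0 by (simp add: field_simps)
    qed simp
    then show ?thesis by (simp add: qe_def pl_def)
  qed
  have evsub: "{G. Ev l S A W B G} \<subseteq> (\<Union>f\<in>FF. Pat f)"
  proof
    fix G assume "G \<in> {G. Ev l S A W B G}"
    then have ev: "\<forall>v\<in>A. \<exists>u\<in>U - {v}. G (l, u, v)" "\<forall>u\<in>S \<union> A. \<forall>j\<in>B - A. \<not> G (l, u, j)"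
      by (auto simp: Ev_def U_def)
    define f where "f = (\<lambda>v. if v \<in> A then (SOME u. u \<in> U - {v} \<and> G (l, u, v)) else undefined)"
    have fv: "f v \<in> U - {v} \<and> G (l, f v, v)" if "v \<in> A" for v
    proof -
      have "\<exists>u. u \<in> U - {v} \<and> G (l, u, v)" using ev(1) that by blast
      from someI_ex[OF this] have "(SOME u. u \<in> U - {v} \<and> G (l, u, v)) \<in> U - {v} \<and> G (l, SOME u. u \<in> U - {v} \<and> G (l, u, v), v)" .
      moreover have "f v = (SOME u. u \<in> U - {v} \<and> G (l, u, v))" using that by (simp add: f_def)
      ultimately show ?thesis by simp
    qed
    have "f \<in> FF" unfolding FF_def
    proof (rule PiE_I)
      show "f v \<in> U - {v}" if "v \<in> A" for v using fv[OF that] by blast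
      show "f v = undefined" if "v \<notin> A" for v using that by (simp add: f_def)
    qed
    moreover have "G \<in> Pat f" using fv ev(2) by (auto simp: Pat_def E1_def E0_def)
    ultimately show "G \<in> (\<Union>f\<in>FF. Pat f)" by blast
  qed
  have each: "measure_pmf.prob (edge_pmf p1 p2 n) (Pat f)
      \<le> (pl / real n) ^ card A * (1 - pl / real n) ^ (card (S \<union> A) * card (B - A))" if f: "f \<in> FF" for f
  proof -
    have fv: "f v \<in> U - {v}" if "v \<in> A" for v using f that by (auto simp: FF_def)
    have Usub: "U \<subseteq> {..<n}" using sub AB by (auto simp: U_def)
    have E1I: "E1 f \<subseteq> Iset n"
    proof
      fix e assume "e \<in> E1 f"
      then obtain v where v: "v \<in> A" "e = (l, f v, v)" by (auto simp: E1_def)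
      have "f v \<in> U - {v}" by (rule fv[OF v(1)])
      then show "e \<in> Iset n" using v Usub sub AB l by (auto simp: Iset_def)
    qed
    have E0I: "E0 \<subseteq> Iset n" using sub AB l SB by (auto simp: E0_def Iset_def)
    have dis: "E1 f \<inter> E0 = {}" by (auto simp: E1_def E0_def)
    have "measure_pmf.prob (edge_pmf p1 p2 n) (Pat f) = (\<Prod>e\<in>E1 f. qe p1 p2 n e) * (\<Prod>e\<in>E0. 1 - qe p1 p2 n e)"
      unfolding Pat_def by (rule prob_pattern[OF E1I E0I dis p])
    also have "(\<Prod>e\<in>E1 f. qe p1 p2 n e) = (\<Prod>e\<in>E1 f. pl / real n)"
      by (rule prod.cong) (auto simp: E1_def qe_l)
    also have "\<dots> = (pl / real n) ^ card (E1 f)" by simp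
    also have "(\<Prod>e\<in>E0. 1 - qe p1 p2 n e) = (\<Prod>e\<in>E0. 1 - pl / real n)"
      by (rule prod.cong) (auto simp: E0_def qe_l)
    also have "\<dots> = (1 - pl / real n) ^ card E0" by simp
    also have "card (E1 f) = card A" unfolding E1_def by (rule card_image) (simp add: inj_on_def)
    also have "card E0 = card (S \<union> A) * card (B - A)"
    proof -
      have "card E0 = card ((S \<union> A) \<times> (B - A))" unfolding E0_def by (rule card_image) (simp add: inj_on_def)
      then show ?thesis by (simp add: card_cartesian_product)
    qed
    finally show ?thesis by simp
  qed
  have "measure_pmf.prob (edge_pmf p1 p2 n) {G. Ev l S A W B G} \<le> measure_pmf.prob (edge_pmf p1 p2 n) (\<Union>f\<in>FF. Pat f)"
    by (rule measure_pmf.finite_measure_mono[OF evsub]) simp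
  also have "\<dots> \<le> real (card FF) * ((pl / real n) ^ card A * (1 - pl / real n) ^ (card (S \<union> A) * card (B - A)))"
    by (rule union_bound[OF finFF each])
  also have "\<dots> \<le> real (card U ^ card A) * ((pl / real n) ^ card A * (1 - pl / real n) ^ (card (S \<union> A) * card (B - A)))"
  proof (rule mult_right_mono)
    show "real (card FF) \<le> real (card U ^ card A)" using cardFF by (simp only: of_nat_le_iff)
    have "pl / real n \<le> 1"
    proof (cases "n = 0")
      case False then show ?thesis using pl0 by (simp add: field_simps)
    qed simp
    then show "0 \<le> (pl / real n) ^ card A * (1 - pl / real n) ^ (card (S \<union> A) * card (B - A))"
      using pl0 by simp
  qed
  finally show ?thesis by (simp add: U_def pl_def)
qed



declare contagion.simps(2)[simp del]

lemma layer_a: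
  fixes p1 p2 d sig :: real and cs :: "nat \<Rightarrow> nat \<Rightarrow> int \<times> int" and l :: nat
  assumes l: "l \<in> {1,2}" and p: "p1 \<ge> 0" "p2 \<ge> 0" and pl: "(if l = 1 then p1 else p2) > 1"
    and d: "d > 0" "4 * (if l = 1 then p1 else p2) * d \<le> (if l = 1 then p1 else p2) - 1 - ln (if l = 1 then p1 else p2)"
    and hc: "\<forall>n. \<forall>i<n. cs n i \<in> capD 0 R"
    and Ls: "(\<lambda>n. real (card {i. i < n \<and> comp l (cs n i) \<le> 0}) / real n) \<longlonglongrightarrow> sig" and sig: "sig > 0"
    and L1: "(\<lambda>n. real (card {i. i < n \<and> comp l (cs n i) \<le> 1}) / real n) \<longlonglongrightarrow> 1"
  shows "(\<lambda>n. measure_pmf.prob (edge_pmf p1 p2 n) {G. d * real n \<le> real (card (final_S 0 R n G (cs n) l))}) \<longlonglongrightarrow> 1"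
proof -
  define q where "q = (if l = 1 then p1 else p2)"
  define c where "c = q - 1 - ln q"
  have q1: "q > 1" using pl by (simp add: q_def)
  have dq: "4 * q * d \<le> q - 1 - ln q" using d(2) by (simp add: q_def)
  have c0: "c > 0"
  proof -
    have "4 * q * d > 0" using q1 d by simp
    then show ?thesis using dq unfolding c_def by linarith
  qed
  define al where "al = sig * c / 8"
  have al0: "al > 0" using sig c0 by (simp add: al_def)
  define om where "om = min d al"
  have om0: "om > 0" using d al0 by (simp add: om_def)
  have ev1: "eventually (\<lambda>n. real (card {i. i < n \<and> comp l (cs n i) \<le> 0}) / real n > sig / 2) sequentially"
    by (rule order_tendstoD(1)[OF Ls]) (use sig in simp)
  have lim_w: "(\<lambda>n. 1 - real (card {i. i < n \<and> comp l (cs n i) \<le> 1}) / real n) \<longlonglongrightarrow> 0"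
    using tendsto_diff[OF tendsto_const L1, of 1] by simp
  have ev2: "eventually (\<lambda>n. 1 - real (card {i. i < n \<and> comp l (cs n i) \<le> 1}) / real n < om) sequentially"
    by (rule order_tendstoD(2)[OF lim_w om0])
  obtain N0 :: nat where N0: "real N0 \<ge> q" using real_arch_simple by blast
  have ev3: "eventually (\<lambda>n. n \<ge> Suc N0) sequentially" by (rule eventually_ge_at_top)
  show ?thesis
  proof (rule to_one[where b="\<lambda>n. (real n + 1) * exp (- al * real n)"])
    show "(\<lambda>n. (real n + 1) * exp (- al * real n)) \<longlonglongrightarrow> 0" by (rule lin_exp_to_0[OF al0])
    show "measure_pmf.prob (edge_pmf p1 p2 n) {G. d * real n \<le> real (card (final_S 0 R n G (cs n) l))} \<le> 1" for n
      by (rule measure_pmf.prob_le_1)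
    show "eventually (\<lambda>n. 1 - (real n + 1) * exp (- al * real n)
        \<le> measure_pmf.prob (edge_pmf p1 p2 n) {G. d * real n \<le> real (card (final_S 0 R n G (cs n) l))}) sequentially"
      using ev1 ev2 ev3
    proof eventually_elim
      case (elim n)
      define S where "S = {i. i < n \<and> comp l (cs n i) \<le> 0}"
      define B where "B = {i. i < n \<and> comp l (cs n i) = 1}"
      define W where "W = {i. i < n \<and> comp l (cs n i) \<ge> 2}"
      have npos: "real n > 0" using elim(3) by simp
      have nq: "real n \<ge> q" using elim(3) N0 by linarith
      have finS: "finite S" "finite B" "finite W" by (auto simp: S_def B_def W_def)
      have sub: "S \<union> B \<union> W \<subseteq> {..<n}" by (auto simp: S_def B_def W_def)
      have SB: "S \<inter> B = {}" by (auto simp: S_def B_def)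
      have part_set: "{..<n} = S \<union> B \<union> W" by (auto simp: S_def B_def W_def)
      have part: "card S + card B + card W = n"
      proof -
        have "card (S \<union> B \<union> W) = card (S \<union> B) + card W"
          by (rule card_Un_disjoint) (use finS in \<open>auto simp: S_def B_def W_def\<close>)
        also have "card (S \<union> B) = card S + card B" by (rule card_Un_disjoint) (use finS SB in auto)
        finally show ?thesis using part_set by (metis card_lessThan)
      qed
      have sbig: "real (card S) > sig / 2 * real n" using elim(1) npos by (simp add: S_def field_simps)
      have wsmall: "real (card W) \<le> om * real n"
      proof -
        have "{i. i < n \<and> comp l (cs n i) \<le> 1} = S \<union> B" by (auto simp: S_def B_def)
        then have "card {i. i < n \<and> comp l (cs n i) \<le> 1} = card S + card B"
          using card_Un_disjoint[OF finS(1,2) SB] by simp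
        moreover have "real (card W) = real n - real (card S + card B)"
          using part by (metis add.commute add_diff_cancel_left' of_nat_add diff_add_cancel)
        moreover have "real n * (1 - real (card S + card B) / real n) = real n - real (card S + card B)"
          using npos by (simp add: field_simps)
        ultimately have "real (card W) = real n * (1 - real (card {i. i < n \<and> comp l (cs n i) \<le> 1}) / real n)"
          by simp
        also have "\<dots> \<le> real n * om" using elim(2) npos by (intro mult_left_mono) auto
        finally show ?thesis by (simp add: mult.commute)
      qed
      define Ia where "Ia = {a. a \<le> card B \<and> real (card S + a) < d * real n}"
      define AA where "AA = (\<lambda>a. {A. A \<subseteq> B \<and> card A = a})"
      have finIa: "finite Ia" by (auto simp: Ia_def)
      have cardIa: "real (card Ia) \<le> real n + 1"
      proof -
        have "Ia \<subseteq> {..n}" using part by (auto simp: Ia_def)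
        then have "card Ia \<le> card {..n}" by (rule card_mono[rotated]) simp
        then show ?thesis by simp
      qed
      have inner: "measure_pmf.prob (edge_pmf p1 p2 n) (\<Union>A\<in>AA a. {G. Ev l S A W B G}) \<le> exp (- al * real n)"
        if a: "a \<in> Ia" for a
      proof -
        have finAA: "finite (AA a)" unfolding AA_def
          by (rule finite_subset[of _ "Pow B"]) (use finS in auto)
        have cardAA: "card (AA a) = card B choose a" unfolding AA_def using n_subsets[OF finS(2), of a] by simp
        define bnd where "bnd = real (card S + a + card W) ^ a * (q / real n) ^ a
            * (1 - q / real n) ^ ((card S + a) * (card B - a))"
        have each: "measure_pmf.prob (edge_pmf p1 p2 n) {G. Ev l S A W B G} \<le> bnd" if A: "A \<in> AA a" for A
        proof -
          have AB: "A \<subseteq> B" "card A = a" using A by (auto simp: AA_def)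
          have finA: "finite A" using AB(1) finS(2) finite_subset by blast
          have c1: "card (S \<union> A \<union> W) = card S + a + card W"
          proof -
            have "card (S \<union> A \<union> W) = card (S \<union> A) + card W"
              by (rule card_Un_disjoint) (use finS finA AB(1) in \<open>auto simp: S_def B_def W_def\<close>)
            also have "card (S \<union> A) = card S + card A" by (rule card_Un_disjoint) (use finS finA SB AB(1) in auto)
            finally show ?thesis using AB(2) by simp
          qed
          have c2: "card (S \<union> A) = card S + a"
            using card_Un_disjoint[OF finS(1) finA] SB AB by auto
          have c3: "card (B - A) = card B - a" using card_Diff_subset[OF finA AB(1)] AB(2) by simp
          have "measure_pmf.prob (edge_pmf p1 p2 n) {G. Ev l S A W B G}
            \<le> real (card (S \<union> A \<union> W)) ^ card A * ((if l = 1 then p1 else p2) / real n) ^ card A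
               * (1 - (if l = 1 then p1 else p2) / real n) ^ (card (S \<union> A) * card (B - A))"
            by (rule prob_Ev[OF l sub SB AB(1) p]) (use nq in \<open>simp add: q_def\<close>)
          then show ?thesis using c1 c2 c3 AB(2) by (simp add: bnd_def q_def)
        qed
        have "measure_pmf.prob (edge_pmf p1 p2 n) (\<Union>A\<in>AA a. {G. Ev l S A W B G}) \<le> real (card (AA a)) * bnd"
          by (rule union_bound[OF finAA each])
        also have "\<dots> = real (card B choose a) * real (card S + a + card W) ^ a * (q / real n) ^ a
            * (1 - q / real n) ^ ((card S + a) * (card B - a))" by (simp add: cardAA bnd_def mult.assoc)
        also have "\<dots> \<le> exp (- real (card S + a) * (q - 1 - ln q) / 2 + real (card W))"
          by (rule est_a[OF q1 dq d(1) nq part _ _ wsmall]) (use a in \<open>auto simp: Ia_def om_def\<close>)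
        also have "\<dots> \<le> exp (- al * real n)"
        proof -
          have "real (card S) * c \<le> real (card S + a) * c" using c0 by (intro mult_right_mono) auto
          moreover have "sig / 2 * real n * c \<le> real (card S) * c" using sbig c0 by (intro mult_right_mono) auto
          moreover have "real (card W) \<le> al * real n"
            using wsmall npos by (smt (verit) mult_right_mono min.cobounded2 om_def)
          moreover have "al * real n = sig / 2 * real n * c / 4" by (simp add: al_def)
          ultimately have "- real (card S + a) * c / 2 + real (card W) \<le> - al * real n" by linarith
          then show ?thesis by (simp add: c_def)
        qed
        finally show ?thesis .
      qed
      have "1 - measure_pmf.prob (edge_pmf p1 p2 n) (\<Union>a\<in>Ia. \<Union>A\<in>AA a. {G. Ev l S A W B G})
          \<le> measure_pmf.prob (edge_pmf p1 p2 n) {G. d * real n \<le> real (card (final_S 0 R n G (cs n) l))}"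
      proof (rule prob_ge_compl)
        fix G assume G: "G \<in> set_pmf (edge_pmf p1 p2 n)"
          and nb: "G \<notin> {G. d * real n \<le> real (card (final_S 0 R n G (cs n) l))}"
        define F where "F = final_S 0 R n G (cs n) l"
        define A where "A = F \<inter> B"
        have hcn: "\<forall>i<n. cs n i \<in> capD 0 R" using hc by blast
        have Fsub: "F \<subseteq> {..<n}" by (auto simp: F_def final_S_def infected_def)
        have finF: "finite F" using Fsub finite_subset by blast
        have SF: "S \<subseteq> F"
        proof
          fix i assume "i \<in> S"
          then show "i \<in> F" unfolding F_def S_def using seed_in[OF _ _ _ l] hcn by auto
        qed
        have AB: "A \<subseteq> B" by (simp add: A_def)
        have Fcov: "F \<subseteq> S \<union> A \<union> W" using Fsub part_set by (auto simp: A_def)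
        have ev: "Ev l S A W B G"
          unfolding Ev_def
        proof (intro conjI ballI)
          fix v assume v: "v \<in> A"
          have "comp l (cs n v) = 1" using v by (simp add: A_def B_def)
          then obtain u where u: "u \<in> F" "u \<noteq> v" "G (l, u, v)"
            using needs_in[where c="cs n" and n=n and G=G, OF hcn l _ _ noloop_supp[OF G]] v by (auto simp: A_def F_def)
          then show "\<exists>u\<in>S \<union> A \<union> W - {v}. G (l, u, v)" using Fcov by blast
        next
          fix u j assume u: "u \<in> S \<union> A" and j: "j \<in> B - A"
          show "\<not> G (l, u, j)"
          proof
            assume e: "G (l, u, j)"
            have "u \<in> F" using u SF by (auto simp: A_def)
            moreover have "j < n" "comp l (cs n j) = 1" using j by (auto simp: B_def)
            ultimately have "j \<in> F" using spread[where c="cs n" and n=n and G=G, OF hcn l] e by (auto simp: F_def)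
            then show False using j by (simp add: A_def)
          qed
        qed
        have "card S + card A \<le> card F"
        proof -
          have "card (S \<union> A) = card S + card A"
            by (rule card_Un_disjoint) (use finS SB AB finF in \<open>auto simp: A_def intro: finite_subset\<close>)
          moreover have "card (S \<union> A) \<le> card F" by (rule card_mono[OF finF]) (use SF in \<open>auto simp: A_def\<close>)
          ultimately show ?thesis by simp
        qed
        then have lt: "real (card S + card A) < d * real n" using nb by (simp add: F_def)
        have "card A \<in> Ia"
        proof -
          have "card A \<le> card B" by (rule card_mono[OF finS(2) AB])
          then show ?thesis using lt by (simp add: Ia_def)
        qed
        moreover have "A \<in> AA (card A)" using AB by (simp add: AA_def)
        ultimately show "G \<in> (\<Union>a\<in>Ia. \<Union>A\<in>AA a. {G. Ev l S A W B G})" using ev by blast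
      qed
      moreover have "measure_pmf.prob (edge_pmf p1 p2 n) (\<Union>a\<in>Ia. \<Union>A\<in>AA a. {G. Ev l S A W B G})
          \<le> (real n + 1) * exp (- al * real n)"
      proof -
        have "measure_pmf.prob (edge_pmf p1 p2 n) (\<Union>a\<in>Ia. \<Union>A\<in>AA a. {G. Ev l S A W B G})
           \<le> real (card Ia) * exp (- al * real n)" by (rule union_bound[OF finIa inner])
        also have "\<dots> \<le> (real n + 1) * exp (- al * real n)" by (rule mult_right_mono[OF cardIa]) simp
        finally show ?thesis .
      qed
      ultimately show ?case by linarith
    qed
  qed
qed



declare contagion.simps(2)[simp del]

lemma cpos: "p > 1 \<Longrightarrow> p - 1 - ln p > (0::real)"
  using ln_le_minus_one[of p] ln_eq_minus_one[of p] by fastforce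

lemma uninf:
  assumes "x \<le> 0" "R \<ge> 1"
  shows "uninfected x R (return_pmf (1, 1))"
  using assms by (auto simp: uninfected_def capD_def DA_def)

lemma part_a:
  fixes R :: int and p1 p2 :: real
  assumes R: "R \<ge> 1" and p1: "p1 > 1" and p2: "p2 > 1"
  shows "non_resilient 0 R p1 p2 (return_pmf (1, 1))"
  unfolding non_resilient_def
proof -
  define d where "d = min ((p1 - 1 - ln p1) / (4 * p1)) ((p2 - 1 - ln p2) / (4 * p2))"
  have d0: "d > 0" using cpos[OF p1] cpos[OF p2] p1 p2 by (simp add: d_def)
  have d1: "4 * p1 * d \<le> p1 - 1 - ln p1"
  proof -
    have "d \<le> (p1 - 1 - ln p1) / (4 * p1)" by (simp add: d_def)
    then show ?thesis using p1 by (simp add: field_simps)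
  qed
  have d2: "4 * p2 * d \<le> p2 - 1 - ln p2"
  proof -
    have "d \<le> (p2 - 1 - ln p2) / (4 * p2)" by (simp add: d_def)
    then show ?thesis using p2 by (simp add: field_simps)
  qed
  show "\<exists>d>0. \<forall>Q. shocked 0 R (return_pmf (1, 1)) Q \<longrightarrow>
        (\<forall>cs. has_limit_law 0 R cs (map_pmf snd Q) \<longrightarrow>
          (\<lambda>n. measure_pmf.prob (edge_pmf p1 p2 n)
             {G. real (card (final_S 0 R n G (cs n) 1) + card (final_S 0 R n G (cs n) 2)) \<ge> d * real n})
          \<longlonglongrightarrow> 1)"
  proof (intro exI[of _ d] conjI allI impI)
    show "d > 0" by (rule d0)
    fix Q cs assume sh: "shocked 0 R (return_pmf (1, 1)) Q" and lim: "has_limit_law 0 R cs (map_pmf snd Q)"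
    define Gl where "Gl = map_pmf snd Q"
    have hc: "\<forall>n. \<forall>i<n. cs n i \<in> capD 0 R" using lim by (simp add: has_limit_law_def)
    have hcR: "\<forall>n i. i < n \<longrightarrow> fst (cs n i) \<le> R \<and> snd (cs n i) \<le> R"
      using hc by (auto simp: capD_def case_prod_beta)
    have L: "(\<lambda>n. real (card {i. i < n \<and> fst (cs n i) \<le> a \<and> snd (cs n i) \<le> b}) / real n)
        \<longlonglongrightarrow> measure_pmf.prob Gl {(u, v). u \<le> a \<and> v \<le> b}" if "(a, b) \<in> capD 0 R" for a b
      using lim that unfolding has_limit_law_def Gl_def by auto
    have P11: "measure_pmf.prob Gl {(u, v). u \<le> 1 \<and> v \<le> 1} = 1" unfolding Gl_def by (rule shock_facts(1)[OF sh])
    have one: "measure_pmf.prob Gl {(u, v). u \<le> a \<and> v \<le> b} = 1" if "a \<ge> 1" "b \<ge> 1" for a b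
    proof -
      have "measure_pmf.prob Gl {(u, v). u \<le> 1 \<and> v \<le> 1} \<le> measure_pmf.prob Gl {(u, v). u \<le> a \<and> v \<le> b}"
        by (rule measure_pmf.finite_measure_mono) (use that in auto)
      moreover have "measure_pmf.prob Gl {(u, v). u \<le> a \<and> v \<le> b} \<le> 1" by (rule measure_pmf.prob_le_1)
      ultimately show ?thesis using P11 by linarith
    qed
    have suppD: "set_pmf Gl \<subseteq> capD 0 R" using sh by (simp add: shocked_def Gl_def)
    have pos: "measure_pmf.prob Q {(c, c'). c' \<in> DA 0 R 1 \<union> DA 0 R 2} > 0" using sh by (simp add: shocked_def)
    have "measure_pmf.prob Q {(c, c'). c' \<in> DA 0 R 1 \<union> DA 0 R 2}
        \<le> measure_pmf.prob Gl ({(u, v). u \<le> 0 \<and> v \<le> R} \<union> {(u, v). u \<le> R \<and> v \<le> 0})"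
      unfolding Gl_def measure_map_pmf
      by (rule measure_pmf.finite_measure_mono) (auto simp: DA_def capD_def)
    also have "\<dots> \<le> measure_pmf.prob Gl {(u, v). u \<le> 0 \<and> v \<le> R} + measure_pmf.prob Gl {(u, v). u \<le> R \<and> v \<le> 0}"
      by (rule measure_Un_le) auto
    finally have "measure_pmf.prob Gl {(u, v). u \<le> 0 \<and> v \<le> R} > 0 \<or> measure_pmf.prob Gl {(u, v). u \<le> R \<and> v \<le> 0} > 0"
      using pos measure_nonneg[of Gl] by (smt (verit) measure_nonneg)
    then obtain l where l: "l \<in> {1, 2}" and layer:
      "(\<lambda>n. measure_pmf.prob (edge_pmf p1 p2 n) {G. d * real n \<le> real (card (final_S 0 R n G (cs n) l))}) \<longlonglongrightarrow> 1"
    proof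
      assume s1: "measure_pmf.prob Gl {(u, v). u \<le> 0 \<and> v \<le> R} > 0"
      have e0: "{i. i < n \<and> comp 1 (cs n i) \<le> 0} = {i. i < n \<and> fst (cs n i) \<le> 0 \<and> snd (cs n i) \<le> R}" for n
        using hcR by (auto simp: comp_def)
      have e1: "{i. i < n \<and> comp 1 (cs n i) \<le> 1} = {i. i < n \<and> fst (cs n i) \<le> 1 \<and> snd (cs n i) \<le> R}" for n
        using hcR by (auto simp: comp_def)
      have "(\<lambda>n. measure_pmf.prob (edge_pmf p1 p2 n) {G. d * real n \<le> real (card (final_S 0 R n G (cs n) 1))}) \<longlonglongrightarrow> 1"
        by (rule layer_a[of 1 p1 p2 d cs R "measure_pmf.prob Gl {(u, v). u \<le> 0 \<and> v \<le> R}"])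
           (use p1 p2 d0 d1 hc s1 L[of 0 R] L[of 1 R] one[of 1 R] R e0 e1 in \<open>simp_all add: capD_def\<close>)
      then show ?thesis using that[of 1] by simp
    next
      assume s2: "measure_pmf.prob Gl {(u, v). u \<le> R \<and> v \<le> 0} > 0"
      have e0: "{i. i < n \<and> comp 2 (cs n i) \<le> 0} = {i. i < n \<and> fst (cs n i) \<le> R \<and> snd (cs n i) \<le> 0}" for n
        using hcR by (auto simp: comp_def)
      have e1: "{i. i < n \<and> comp 2 (cs n i) \<le> 1} = {i. i < n \<and> fst (cs n i) \<le> R \<and> snd (cs n i) \<le> 1}" for n
        using hcR by (auto simp: comp_def)
      have "(\<lambda>n. measure_pmf.prob (edge_pmf p1 p2 n) {G. d * real n \<le> real (card (final_S 0 R n G (cs n) 2))}) \<longlonglongrightarrow> 1"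
        by (rule layer_a[of 2 p1 p2 d cs R "measure_pmf.prob Gl {(u, v). u \<le> R \<and> v \<le> 0}"])
           (use p1 p2 d0 d2 hc s2 L[of R 0] L[of R 1] one[of R 1] R e0 e1 in \<open>simp_all add: capD_def\<close>)
      then show ?thesis using that[of 2] by simp
    qed
    show "(\<lambda>n. measure_pmf.prob (edge_pmf p1 p2 n)
             {G. real (card (final_S 0 R n G (cs n) 1) + card (final_S 0 R n G (cs n) 2)) \<ge> d * real n})
          \<longlonglongrightarrow> 1"
    proof (rule tendsto_sandwich[OF _ _ layer tendsto_const])
      show "eventually (\<lambda>n. measure_pmf.prob (edge_pmf p1 p2 n) {G. d * real n \<le> real (card (final_S 0 R n G (cs n) l))}
          \<le> measure_pmf.prob (edge_pmf p1 p2 n)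
             {G. real (card (final_S 0 R n G (cs n) 1) + card (final_S 0 R n G (cs n) 2)) \<ge> d * real n}) sequentially"
        by (rule always_eventually, intro allI measure_pmf.finite_measure_mono) (use l in auto)
      show "eventually (\<lambda>n. measure_pmf.prob (edge_pmf p1 p2 n)
             {G. real (card (final_S 0 R n G (cs n) 1) + card (final_S 0 R n G (cs n) 2)) \<ge> d * real n} \<le> 1) sequentially"
        by (simp add: measure_pmf.prob_le_1)
    qed
  qed
qed

theorem mainTheorem8:
  fixes x R :: int and p1 p2 :: real
  assumes "R \<ge> 1" and "p1 > 1" and "p2 > 1"
  shows "(x = 0 \<longrightarrow> uninfected x R (return_pmf (1, 1)) \<and> non_resilient x R p1 p2 (return_pmf (1, 1)))
    \<and> (x \<le> -1 \<longrightarrow> uninfected x R (return_pmf (1, 1)) \<and> resilient x R p1 p2 (return_pmf (1, 1)))"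
  using uninf[of x R] part_a[OF assms] part_b[of x R p1 p2] assms by auto


end
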